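(* Let $H$ be a finite-dimensional Hopf algebra over a field $\Bbbk$ and $B$ a right $H$-comodule algebra. Then every projective $B$-module and every injective $B$-module belongs to $\mathcal{N}_H$; consequently every projective or injective $B$-module is isomorphic to the zero object in $\mathcal{C}(B,H)$.
   Context: $H$ has comultiplication $\Delta(h)=\sum h_1\otimes h_2$, counit $\epsilon$, antipode $S$. A right $H$-comodule algebra is a unital $\Bbbk$-algebra $B$ with a unital algebra map $\Delta_B:B\to B\otimes H$, $\Delta_B(b)=\sum b_1\otimes b_2$, that is coassociative and counital. For a $B$-module $M$ and an $H$-module $U$, $M\otimes U$ is a $B$-module via $b\cdot(x\otimes u)=\sum b_1x\otimes b_2u$. A $B$-module morphism is null-homotopic if it factors through a $B$-module of the form $N\otimes H$ ($H$ the left regular module). $\mathcal{N}_H$ denotes the class of $B$-modules whose identity morphism is null-homotopic. $\mathcal{C}(B,H)$ is the quotient of the category of $B$-modules by the ideal of null-homotopic morphisms. *)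

theory Defs
  imports Main
begin

text \<open>H is a finite-dimensional Hopf algebra over the field 'k, presented by a basis
 e_a indexed by the finite type 'i; an element of H is a coordinate vector 'i => 'k.
 Structure constants:
   e_a e_b = sum_c mu a b c e_c,   1_H = sum_a u a e_a,
   Delta e_a = sum_(b,c) de a b c (e_b (x) e_c),   epsilon e_a = eps a,
   S e_a = sum_c Sa a c e_c.\<close>

definition kron :: "'i \<Rightarrow> 'i \<Rightarrow> 'k::field" where
  "kron a b = (if a = b then 1 else 0)"

definition hopf_algebra ::
  "('i::finite \<Rightarrow> 'i \<Rightarrow> 'i \<Rightarrow> 'k::field) \<Rightarrow> ('i \<Rightarrow> 'k) \<Rightarrow>
   ('i \<Rightarrow> 'i \<Rightarrow> 'i \<Rightarrow> 'k) \<Rightarrow> ('i \<Rightarrow> 'k) \<Rightarrow> ('i \<Rightarrow> 'i \<Rightarrow> 'k) \<Rightarrow> bool" where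
  "hopf_algebra mu u de eps Sa \<longleftrightarrow>
     \<comment> \<open>associativity and unit\<close>
     (\<forall>a b c r. (\<Sum>x\<in>UNIV. mu a b x * mu x c r) = (\<Sum>x\<in>UNIV. mu b c x * mu a x r)) \<and>
     (\<forall>a r. (\<Sum>x\<in>UNIV. u x * mu x a r) = kron a r) \<and>
     (\<forall>a r. (\<Sum>x\<in>UNIV. u x * mu a x r) = kron a r) \<and>
     \<comment> \<open>coassociativity and counit\<close>
     (\<forall>a p q c. (\<Sum>d\<in>UNIV. de a d c * de d p q) = (\<Sum>d\<in>UNIV. de a p d * de d q c)) \<and>
     (\<forall>a c. (\<Sum>d\<in>UNIV. de a d c * eps d) = kron a c) \<and>
     (\<forall>a c. (\<Sum>d\<in>UNIV. de a c d * eps d) = kron a c) \<and>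
     \<comment> \<open>Delta and epsilon are unital algebra maps\<close>
     (\<forall>a b p q. (\<Sum>c\<in>UNIV. mu a b c * de c p q) =
        (\<Sum>p1\<in>UNIV. \<Sum>q1\<in>UNIV. \<Sum>p2\<in>UNIV. \<Sum>q2\<in>UNIV.
           de a p1 q1 * de b p2 q2 * mu p1 p2 p * mu q1 q2 q)) \<and>
     (\<forall>p q. (\<Sum>a\<in>UNIV. u a * de a p q) = u p * u q) \<and>
     (\<forall>a b. (\<Sum>c\<in>UNIV. mu a b c * eps c) = eps a * eps b) \<and>
     (\<Sum>a\<in>UNIV. u a * eps a) = 1 \<and>
     \<comment> \<open>antipode: m(S (x) id)Delta = u epsilon = m(id (x) S)Delta\<close>
     (\<forall>a r. (\<Sum>d\<in>UNIV. \<Sum>c\<in>UNIV. \<Sum>x\<in>UNIV. de a d c * Sa d x * mu x c r) = eps a * u r) \<and>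
     (\<forall>a r. (\<Sum>d\<in>UNIV. \<Sum>c\<in>UNIV. \<Sum>y\<in>UNIV. de a d c * Sa c y * mu d y r) = eps a * u r)"

definition k_algebra :: "('k::field \<Rightarrow> 'b::ring_1 \<Rightarrow> 'b) \<Rightarrow> bool" where
  "k_algebra scB \<longleftrightarrow>
     (\<forall>c x y. scB c (x + y) = scB c x + scB c y) \<and>
     (\<forall>c d x. scB (c + d) x = scB c x + scB d x) \<and>
     (\<forall>c d x. scB (c * d) x = scB c (scB d x)) \<and>
     (\<forall>x. scB 1 x = x) \<and>
     (\<forall>c x y. scB c (x * y) = scB c x * y) \<and>
     (\<forall>c x y. scB c (x * y) = x * scB c y)"

text \<open>Right H-comodule algebra structure Delta_B : B -> B (x) H, written in the basis of H:
  Delta_B(b) = sum_i dB b i (x) e_i.\<close>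

definition comodule_algebra ::
  "('k::field \<Rightarrow> 'b::ring_1 \<Rightarrow> 'b) \<Rightarrow> ('i::finite \<Rightarrow> 'i \<Rightarrow> 'i \<Rightarrow> 'k) \<Rightarrow> ('i \<Rightarrow> 'k) \<Rightarrow>
   ('i \<Rightarrow> 'i \<Rightarrow> 'i \<Rightarrow> 'k) \<Rightarrow> ('i \<Rightarrow> 'k) \<Rightarrow> ('b \<Rightarrow> 'i \<Rightarrow> 'b) \<Rightarrow> bool" where
  "comodule_algebra scB mu u de eps dB \<longleftrightarrow>
     \<comment> \<open>k-linearity\<close>
     (\<forall>x y i. dB (x + y) i = dB x i + dB y i) \<and>
     (\<forall>c x i. dB (scB c x) i = scB c (dB x i)) \<and>
     \<comment> \<open>unital algebra map into B (x) H\<close>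
     (\<forall>x y r. dB (x * y) r = (\<Sum>i\<in>UNIV. \<Sum>j\<in>UNIV. scB (mu i j r) (dB x i * dB y j))) \<and>
     (\<forall>r. dB 1 r = scB (u r) 1) \<and>
     \<comment> \<open>coassociativity: (Delta_B (x) id) Delta_B = (id (x) Delta) Delta_B\<close>
     (\<forall>x j c. dB (dB x c) j = (\<Sum>i\<in>UNIV. scB (de i j c) (dB x i))) \<and>
     \<comment> \<open>counitality: (id (x) epsilon) Delta_B = id\<close>
     (\<forall>x. (\<Sum>i\<in>UNIV. scB (eps i) (dB x i)) = x)"

record ('b, 'm) bmod =
  carrier :: "'m set"
  madd :: "'m \<Rightarrow> 'm \<Rightarrow> 'm"
  mzero :: "'m"
  act :: "'b \<Rightarrow> 'm \<Rightarrow> 'm"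

definition bmodule :: "('b::ring_1, 'm) bmod \<Rightarrow> bool" where
  "bmodule M \<longleftrightarrow>
     mzero M \<in> carrier M \<and>
     (\<forall>x\<in>carrier M. \<forall>y\<in>carrier M. madd M x y \<in> carrier M) \<and>
     (\<forall>b. \<forall>x\<in>carrier M. act M b x \<in> carrier M) \<and>
     (\<forall>x\<in>carrier M. \<forall>y\<in>carrier M. \<forall>z\<in>carrier M.
        madd M (madd M x y) z = madd M x (madd M y z)) \<and>
     (\<forall>x\<in>carrier M. \<forall>y\<in>carrier M. madd M x y = madd M y x) \<and>
     (\<forall>x\<in>carrier M. madd M (mzero M) x = x) \<and>
     (\<forall>x\<in>carrier M. \<exists>y\<in>carrier M. madd M x y = mzero M) \<and>
     (\<forall>b. \<forall>x\<in>carrier M. \<forall>y\<in>carrier M. act M b (madd M x y) = madd M (act M b x) (act M b y)) \<and>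
     (\<forall>a b. \<forall>x\<in>carrier M. act M (a + b) x = madd M (act M a x) (act M b x)) \<and>
     (\<forall>a b. \<forall>x\<in>carrier M. act M (a * b) x = act M a (act M b x)) \<and>
     (\<forall>x\<in>carrier M. act M 1 x = x)"

text \<open>B-module morphisms (only their values on the carrier matter).\<close>

definition bhom :: "('b, 'm) bmod \<Rightarrow> ('b, 'n) bmod \<Rightarrow> ('m \<Rightarrow> 'n) \<Rightarrow> bool" where
  "bhom M N f \<longleftrightarrow>
     (\<forall>x\<in>carrier M. f x \<in> carrier N) \<and>
     (\<forall>x\<in>carrier M. \<forall>y\<in>carrier M. f (madd M x y) = madd N (f x) (f y)) \<and>
     (\<forall>b. \<forall>x\<in>carrier M. f (act M b x) = act N b (f x))"

definition enum_idx :: "'i::finite list" where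
  "enum_idx = (SOME xs. distinct xs \<and> set xs = UNIV)"

definition msum :: "('b, 'm) bmod \<Rightarrow> ('i::finite \<Rightarrow> 'm) \<Rightarrow> 'm" where
  "msum M f = foldr (\<lambda>i s. madd M (f i) s) enum_idx (mzero M)"

text \<open>The B-module N (x) H (H the left regular H-module), with
  b . (x (x) h) = sum b_1 x (x) b_2 h.  An element sum_j x_j (x) e_j is represented by its
  coordinate function x : 'i => 'n.\<close>

definition tensH :: "('k::field \<Rightarrow> 'b::ring_1 \<Rightarrow> 'b) \<Rightarrow> ('i::finite \<Rightarrow> 'i \<Rightarrow> 'i \<Rightarrow> 'k) \<Rightarrow>
   ('b \<Rightarrow> 'i \<Rightarrow> 'b) \<Rightarrow> ('b, 'n) bmod \<Rightarrow> ('b, 'i \<Rightarrow> 'n) bmod" where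
  "tensH scB mu dB N =
     \<lparr> carrier = {x. \<forall>i. x i \<in> carrier N},
       madd = (\<lambda>x y i. madd N (x i) (y i)),
       mzero = (\<lambda>i. mzero N),
       act = (\<lambda>b x c. msum N (\<lambda>i. msum N (\<lambda>j. act N (scB (mu i j c) (dB b i)) (x j)))) \<rparr>"

text \<open>Null-homotopic morphisms: f : M -> M' factors through a module N (x) H.
  (The module N is taken with carrier in the same type as M; witnesses always exist there.)\<close>

definition nullhom :: "('k::field \<Rightarrow> 'b::ring_1 \<Rightarrow> 'b) \<Rightarrow> ('i::finite \<Rightarrow> 'i \<Rightarrow> 'i \<Rightarrow> 'k) \<Rightarrow>
   ('b \<Rightarrow> 'i \<Rightarrow> 'b) \<Rightarrow> ('b, 'm) bmod \<Rightarrow> ('b, 'n) bmod \<Rightarrow> ('m \<Rightarrow> 'n) \<Rightarrow> bool" where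
  "nullhom scB mu dB M M' f \<longleftrightarrow>
     (\<exists>(N :: ('b, 'm) bmod) g h. bmodule N \<and>
        bhom M (tensH scB mu dB N) g \<and> bhom (tensH scB mu dB N) M' h \<and>
        (\<forall>x\<in>carrier M. f x = h (g x)))"

definition in_NH :: "('k::field \<Rightarrow> 'b::ring_1 \<Rightarrow> 'b) \<Rightarrow> ('i::finite \<Rightarrow> 'i \<Rightarrow> 'i \<Rightarrow> 'k) \<Rightarrow>
   ('b \<Rightarrow> 'i \<Rightarrow> 'b) \<Rightarrow> ('b, 'm) bmod \<Rightarrow> bool" where
  "in_NH scB mu dB M \<longleftrightarrow> nullhom scB mu dB M M id"

text \<open>The zero module (on the same carrier type), and isomorphism to the zero object in the
  quotient category C(B,H): morphisms f : M -> 0, g : 0 -> M whose composites agree with the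
  identities modulo null-homotopic morphisms.\<close>

definition zero_bmod :: "('b, 'm) bmod \<Rightarrow> ('b, 'm) bmod" where
  "zero_bmod M = \<lparr> carrier = {mzero M}, madd = (\<lambda>x y. mzero M), mzero = mzero M,
                   act = (\<lambda>b x. mzero M) \<rparr>"

definition iso_zero_C :: "('k::field \<Rightarrow> 'b::ring_1 \<Rightarrow> 'b) \<Rightarrow> ('i::finite \<Rightarrow> 'i \<Rightarrow> 'i \<Rightarrow> 'k) \<Rightarrow>
   ('b \<Rightarrow> 'i \<Rightarrow> 'b) \<Rightarrow> ('b, 'm) bmod \<Rightarrow> bool" where
  "iso_zero_C scB mu dB M \<longleftrightarrow>
     (\<exists>f g. bhom M (zero_bmod M) f \<and> bhom (zero_bmod M) M g \<and>
        nullhom scB mu dB M M (\<lambda>x. madd M (g (f x)) (act M (- 1) x)) \<and>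
        nullhom scB mu dB (zero_bmod M) (zero_bmod M)
          (\<lambda>x. madd (zero_bmod M) (f (g x)) (act (zero_bmod M) (- 1) x)))"

text \<open>Lifting / extension properties against all B-modules whose carriers live in the
  type 'u (playing the role of a universe of test modules).\<close>

definition projective_mod :: "'u itself \<Rightarrow> ('b::ring_1, 'm) bmod \<Rightarrow> bool" where
  "projective_mod (TYPE('u)) P \<longleftrightarrow>
     (\<forall>(X :: ('b, 'u) bmod) (Y :: ('b, 'u) bmod) p f.
        bmodule X \<and> bmodule Y \<and> bhom X Y p \<and> p ` carrier X = carrier Y \<and> bhom P Y f \<longrightarrow>
        (\<exists>h. bhom P X h \<and> (\<forall>x\<in>carrier P. p (h x) = f x)))"

definition injective_mod :: "'u itself \<Rightarrow> ('b::ring_1, 'm) bmod \<Rightarrow> bool" where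
  "injective_mod (TYPE('u)) E \<longleftrightarrow>
     (\<forall>(X :: ('b, 'u) bmod) (Y :: ('b, 'u) bmod) i f.
        bmodule X \<and> bmodule Y \<and> bhom X Y i \<and> inj_on i (carrier X) \<and> bhom X E f \<longrightarrow>
        (\<exists>h. bhom Y E h \<and> (\<forall>x\<in>carrier X. h (i x) = f x)))"

end

theory Submission
  imports Defs
begin



lemma kron_sym: "kron a b = kron b a" by (simp add: kron_def)

locale hopf =
  fixes mu :: "'i::finite \<Rightarrow> 'i \<Rightarrow> 'i \<Rightarrow> 'k::field"
    and u :: "'i \<Rightarrow> 'k" and de :: "'i \<Rightarrow> 'i \<Rightarrow> 'i \<Rightarrow> 'k"
    and eps :: "'i \<Rightarrow> 'k" and Sa :: "'i \<Rightarrow> 'i \<Rightarrow> 'k"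
  assumes H: "hopf_algebra mu u de eps Sa"
begin

lemmas Hs = H[unfolded hopf_algebra_def]

lemma assoc: "(\<Sum>x\<in>UNIV. mu a b x * mu x c r) = (\<Sum>x\<in>UNIV. mu b c x * mu a x r)"
  using Hs by metis
lemma unitL: "(\<Sum>x\<in>UNIV. u x * mu x a r) = kron a r"
  using Hs by metis
lemma unitR: "(\<Sum>x\<in>UNIV. u x * mu a x r) = kron a r"
  using Hs by metis
lemma coassoc: "(\<Sum>d\<in>UNIV. de a d c * de d p q) = (\<Sum>d\<in>UNIV. de a p d * de d q c)"
  using Hs by metis
lemma counitL: "(\<Sum>d\<in>UNIV. de a d c * eps d) = kron a c"
  using Hs by metis
lemma counitR: "(\<Sum>d\<in>UNIV. de a c d * eps d) = kron a c"
  using Hs by metis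
lemma bialg: "(\<Sum>c\<in>UNIV. mu a b c * de c p q) =
        (\<Sum>p1\<in>UNIV. \<Sum>q1\<in>UNIV. \<Sum>p2\<in>UNIV. \<Sum>q2\<in>UNIV. de a p1 q1 * de b p2 q2 * mu p1 p2 p * mu q1 q2 q)"
  using Hs by metis
lemma deu: "(\<Sum>a\<in>UNIV. u a * de a p q) = u p * u q"
  using Hs by metis
lemma epsmu: "(\<Sum>c\<in>UNIV. mu a b c * eps c) = eps a * eps b"
  using Hs by metis
lemma ueps: "(\<Sum>a\<in>UNIV. u a * eps a) = 1"
  using Hs by metis
lemma antiL: "(\<Sum>d\<in>UNIV. \<Sum>c\<in>UNIV. \<Sum>x\<in>UNIV. de a d c * Sa d x * mu x c r) = eps a * u r"
  using Hs by metis
lemma antiR: "(\<Sum>d\<in>UNIV. \<Sum>c\<in>UNIV. \<Sum>y\<in>UNIV. de a d c * Sa c y * mu d y r) = eps a * u r"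
  using Hs by metis

lemma sum_kron1[simp]: "(\<Sum>(a::'i)\<in>UNIV. kron a b * f a) = f b" (is "?l = _")
proof -
  have "?l = (\<Sum>a\<in>UNIV. if a = b then f b else 0)" by (rule sum.cong) (auto simp: kron_def)
  thus ?thesis by (simp add: sum.delta)
qed
lemma sum_kron2[simp]: "(\<Sum>(a::'i)\<in>UNIV. kron b a * f a) = f b" (is "?l = _")
proof -
  have "?l = (\<Sum>a\<in>UNIV. if a = b then f b else 0)" by (rule sum.cong) (auto simp: kron_def)
  thus ?thesis by (simp add: sum.delta)
qed
lemma sum_kron3[simp]: "(\<Sum>(a::'i)\<in>UNIV. f a * kron a b) = f b" (is "?l = _")
proof -
  have "?l = (\<Sum>a\<in>UNIV. if a = b then f b else 0)" by (rule sum.cong) (auto simp: kron_def)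
  thus ?thesis by (simp add: sum.delta)
qed
lemma sum_kron4[simp]: "(\<Sum>(a::'i)\<in>UNIV. f a * kron b a) = f b" (is "?l = _")
proof -
  have "?l = (\<Sum>a\<in>UNIV. if a = b then f b else 0)" by (rule sum.cong) (auto simp: kron_def)
  thus ?thesis by (simp add: sum.delta)
qed

lemma epsS: "(\<Sum>c\<in>UNIV. Sa a c * eps c) = eps a"
proof -
  have "(\<Sum>r\<in>UNIV. (\<Sum>d\<in>UNIV. \<Sum>c\<in>UNIV. \<Sum>x\<in>UNIV. de a d c * Sa d x * mu x c r) * eps r) = (\<Sum>r\<in>UNIV. eps a * u r * eps r)"
    by (simp add: antiL)
  also have "\<dots> = eps a" by (simp add: mult.assoc ueps flip: sum_distrib_left)
  finally have 1: "(\<Sum>r\<in>UNIV. (\<Sum>d\<in>UNIV. \<Sum>c\<in>UNIV. \<Sum>x\<in>UNIV. de a d c * Sa d x * mu x c r) * eps r) = eps a" .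
  have "(\<Sum>r\<in>UNIV. (\<Sum>d\<in>UNIV. \<Sum>c\<in>UNIV. \<Sum>x\<in>UNIV. de a d c * Sa d x * mu x c r) * eps r)
     = (\<Sum>d\<in>UNIV. \<Sum>c\<in>UNIV. \<Sum>x\<in>UNIV. de a d c * Sa d x * (\<Sum>r\<in>UNIV. mu x c r * eps r))"
    apply (simp only: sum_distrib_left sum_distrib_right sum.cartesian_product)
    apply (rule sum.reindex_bij_witness[where j="\<lambda>(r,d,c,x). (d,c,x,r)" and i="\<lambda>(d,c,x,r). (r,d,c,x)"])
    apply (auto simp: mult_ac)
    done
  also have "\<dots> = (\<Sum>d\<in>UNIV. (\<Sum>c\<in>UNIV. de a d c * eps c) * (\<Sum>x\<in>UNIV. Sa d x * eps x))"
    unfolding epsmu by (simp add: sum_distrib_left sum_distrib_right mult_ac)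
  also have "\<dots> = (\<Sum>x\<in>UNIV. Sa a x * eps x)" by (simp add: counitR)
  finally show ?thesis using 1 by simp
qed


definition tmul :: "('i \<Rightarrow> 'i \<Rightarrow> 'k) \<Rightarrow> ('i \<Rightarrow> 'i \<Rightarrow> 'k) \<Rightarrow> 'i \<Rightarrow> 'i \<Rightarrow> 'k" where
  "tmul T U p q = (\<Sum>p1\<in>UNIV. \<Sum>q1\<in>UNIV. \<Sum>p2\<in>UNIV. \<Sum>q2\<in>UNIV. T p1 q1 * U p2 q2 * mu p1 p2 p * mu q1 q2 q)"

definition conv :: "('i \<Rightarrow> 'i \<Rightarrow> 'i \<Rightarrow> 'k) \<Rightarrow> ('i \<Rightarrow> 'i \<Rightarrow> 'i \<Rightarrow> 'k) \<Rightarrow> 'i \<Rightarrow> 'i \<Rightarrow> 'i \<Rightarrow> 'k" where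
  "conv F G x p q = (\<Sum>a\<in>UNIV. \<Sum>b\<in>UNIV. de x a b * tmul (F a) (G b) p q)"

lemma conv_assoc: "conv (conv F G) K x p q = conv F (conv G K) x p q"
proof -
  have "conv (conv F G) K x p q = (\<Sum>b\<in>UNIV. \<Sum>a'\<in>UNIV. \<Sum>b'\<in>UNIV. \<Sum>r1\<in>UNIV. \<Sum>s1\<in>UNIV. \<Sum>r2\<in>UNIV. \<Sum>s2\<in>UNIV. \<Sum>p2\<in>UNIV. \<Sum>q2\<in>UNIV.
      F a' r1 s1 * G b' r2 s2 * K b p2 q2 * (\<Sum>a\<in>UNIV. de x a b * de a a' b') * (\<Sum>p1\<in>UNIV. mu r1 r2 p1 * mu p1 p2 p) * (\<Sum>q1\<in>UNIV. mu s1 s2 q1 * mu q1 q2 q))"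
    unfolding conv_def tmul_def
    apply (simp only: sum_distrib_left sum_distrib_right sum.cartesian_product)
    apply (rule sum.reindex_bij_witness[where j="\<lambda>(a,b,p1,q1,p2,q2,a',b',r1,s1,r2,s2). (b,a',b',r1,s1,r2,s2,p2,q2,q1,p1,a)"
         and i="\<lambda>(b,a',b',r1,s1,r2,s2,p2,q2,q1,p1,a). (a,b,p1,q1,p2,q2,a',b',r1,s1,r2,s2)"])
    apply (auto simp: mult_ac)
    done
  also have "\<dots> = (\<Sum>b\<in>UNIV. \<Sum>a'\<in>UNIV. \<Sum>b'\<in>UNIV. \<Sum>r1\<in>UNIV. \<Sum>s1\<in>UNIV. \<Sum>r2\<in>UNIV. \<Sum>s2\<in>UNIV. \<Sum>p2\<in>UNIV. \<Sum>q2\<in>UNIV.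
      F a' r1 s1 * G b' r2 s2 * K b p2 q2 * (\<Sum>a\<in>UNIV. de x a' a * de a b' b) * (\<Sum>t\<in>UNIV. mu r2 p2 t * mu r1 t p) * (\<Sum>t\<in>UNIV. mu s2 q2 t * mu s1 t q))"
    by (simp only: coassoc assoc)
  also have "\<dots> = conv F (conv G K) x p q"
    unfolding conv_def tmul_def
    apply (simp only: sum_distrib_left sum_distrib_right sum.cartesian_product)
    apply (rule sum.reindex_bij_witness[where j="\<lambda>(b,a',b',r1,s1,r2,s2,p2,q2,t',t,a). (a',a,r1,s1,t,t',b',b,r2,s2,p2,q2)"
         and i="\<lambda>(a',a,r1,s1,t,t',b',b,r2,s2,p2,q2). (b,a',b',r1,s1,r2,s2,p2,q2,t',t,a)"])
    apply (auto simp: mult_ac)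
    done
  finally show ?thesis .
qed


lemma sum_if_out[simp]: "(\<Sum>k\<in>A. if P then f k else 0) = (if P then (\<Sum>k\<in>A. f k) else 0)"
  by simp

lemma kron_mult[simp]: "kron a b * x = (if a = b then x else 0)" "x * kron a b = (if a = b then x else 0)"
  by (simp_all add: kron_def)

definition "E x p q = eps x * u p * u q"

lemma conv_unitL: "conv E K x p q = K x p q"
proof -
  have "conv E K x p q = (\<Sum>b\<in>UNIV. \<Sum>p2\<in>UNIV. \<Sum>q2\<in>UNIV. K b p2 q2 * (\<Sum>a\<in>UNIV. de x a b * eps a) * (\<Sum>p1\<in>UNIV. u p1 * mu p1 p2 p) * (\<Sum>q1\<in>UNIV. u q1 * mu q1 q2 q))"
    unfolding conv_def tmul_def E_def
    apply (simp only: sum_distrib_left sum_distrib_right sum.cartesian_product)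
    apply (rule sum.reindex_bij_witness[where j="\<lambda>(a,b,p1,q1,p2,q2). (b,p2,q2,q1,p1,a)"
         and i="\<lambda>(b,p2,q2,q1,p1,a). (a,b,p1,q1,p2,q2)"])
    apply (auto simp: mult_ac)
    done
  also have "\<dots> = K x p q" by (simp add: counitL unitL sum.delta sum.delta')
  finally show ?thesis .
qed

lemma conv_unitR: "conv F E x p q = F x p q"
proof -
  have "conv F E x p q = (\<Sum>a\<in>UNIV. \<Sum>p1\<in>UNIV. \<Sum>q1\<in>UNIV. F a p1 q1 * (\<Sum>b\<in>UNIV. de x a b * eps b) * (\<Sum>p2\<in>UNIV. u p2 * mu p1 p2 p) * (\<Sum>q2\<in>UNIV. u q2 * mu q1 q2 q))"
    unfolding conv_def tmul_def E_def
    apply (simp only: sum_distrib_left sum_distrib_right sum.cartesian_product)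
    apply (rule sum.reindex_bij_witness[where j="\<lambda>(a,b,p1,q1,p2,q2). (a,p1,q1,q2,p2,b)"
         and i="\<lambda>(a,p1,q1,q2,p2,b). (a,b,p1,q1,p2,q2)"])
    apply (auto simp: mult_ac)
    done
  also have "\<dots> = F x p q" by (simp add: counitR unitR sum.delta sum.delta')
  finally show ?thesis .
qed


definition "Lm x p q = (\<Sum>a\<in>UNIV. Sa x a * de a p q)"
definition "Dm x p q = de x p q"
definition "Rm x p q = (\<Sum>p'\<in>UNIV. \<Sum>q'\<in>UNIV. de x q' p' * Sa p' p * Sa q' q)"

lemma convLD: "conv Lm Dm x p q = E x p q"
proof -
  have "conv Lm Dm x p q = (\<Sum>a\<in>UNIV. \<Sum>b\<in>UNIV. \<Sum>c\<in>UNIV. de x a b * Sa a c *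
      (\<Sum>p1\<in>UNIV. \<Sum>q1\<in>UNIV. \<Sum>p2\<in>UNIV. \<Sum>q2\<in>UNIV. de c p1 q1 * de b p2 q2 * mu p1 p2 p * mu q1 q2 q))"
    unfolding conv_def tmul_def Lm_def Dm_def
    apply (simp only: sum_distrib_left sum_distrib_right sum.cartesian_product)
    apply (rule sum.reindex_bij_witness[where j="\<lambda>(a,b,p1,q1,p2,q2,c). (a,b,c,p1,q1,p2,q2)"
         and i="\<lambda>(a,b,c,p1,q1,p2,q2). (a,b,p1,q1,p2,q2,c)"])
    apply (auto simp: mult_ac)
    done
  also have "\<dots> = (\<Sum>a\<in>UNIV. \<Sum>b\<in>UNIV. \<Sum>c\<in>UNIV. de x a b * Sa a c * (\<Sum>t\<in>UNIV. mu c b t * de t p q))"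
    by (simp only: bialg)
  also have "\<dots> = (\<Sum>t\<in>UNIV. de t p q * (\<Sum>a\<in>UNIV. \<Sum>b\<in>UNIV. \<Sum>c\<in>UNIV. de x a b * Sa a c * mu c b t))"
    apply (simp only: sum_distrib_left sum_distrib_right sum.cartesian_product)
    apply (rule sum.reindex_bij_witness[where j="\<lambda>(a,b,c,t). (t,a,b,c)"
         and i="\<lambda>(t,a,b,c). (a,b,c,t)"])
    apply (auto simp: mult_ac)
    done
  also have "\<dots> = (\<Sum>t\<in>UNIV. de t p q * (eps x * u t))" by (simp only: antiL)
  also have "\<dots> = eps x * (\<Sum>t\<in>UNIV. u t * de t p q)" by (simp add: sum_distrib_left mult_ac)
  also have "\<dots> = E x p q" by (simp add: deu E_def mult_ac)
  finally show ?thesis .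
qed

lemma convDR: "conv Dm Rm x p q = E x p q"
proof -
  have "conv Dm Rm x p q = (\<Sum>b\<in>UNIV. \<Sum>p1\<in>UNIV. \<Sum>q1\<in>UNIV. \<Sum>p2\<in>UNIV. \<Sum>q2\<in>UNIV. \<Sum>p'\<in>UNIV. \<Sum>q'\<in>UNIV.
      de b q' p' * Sa p' p2 * Sa q' q2 * mu p1 p2 p * mu q1 q2 q * (\<Sum>a\<in>UNIV. de x a b * de a p1 q1))"
    unfolding conv_def tmul_def Rm_def Dm_def
    apply (simp only: sum_distrib_left sum_distrib_right sum.cartesian_product)
    apply (rule sum.reindex_bij_witness[where j="\<lambda>(a,b,p1,q1,p2,q2,p',q'). (b,p1,q1,p2,q2,p',q',a)"
         and i="\<lambda>(b,p1,q1,p2,q2,p',q',a). (a,b,p1,q1,p2,q2,p',q')"])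
    apply (auto simp: mult_ac)
    done
  also have "\<dots> = (\<Sum>b\<in>UNIV. \<Sum>p1\<in>UNIV. \<Sum>q1\<in>UNIV. \<Sum>p2\<in>UNIV. \<Sum>q2\<in>UNIV. \<Sum>p'\<in>UNIV. \<Sum>q'\<in>UNIV.
      de b q' p' * Sa p' p2 * Sa q' q2 * mu p1 p2 p * mu q1 q2 q * (\<Sum>a\<in>UNIV. de x p1 a * de a q1 b))"
    by (simp only: coassoc)
  also have "\<dots> = (\<Sum>a\<in>UNIV. \<Sum>p1\<in>UNIV. \<Sum>q1\<in>UNIV. \<Sum>p2\<in>UNIV. \<Sum>q2\<in>UNIV. \<Sum>p'\<in>UNIV. \<Sum>q'\<in>UNIV.
      de x p1 a * Sa p' p2 * Sa q' q2 * mu p1 p2 p * mu q1 q2 q * (\<Sum>b\<in>UNIV. de a q1 b * de b q' p'))"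
    apply (simp only: sum_distrib_left sum_distrib_right sum.cartesian_product)
    apply (rule sum.reindex_bij_witness[where j="\<lambda>(b,p1,q1,p2,q2,p',q',a). (a,p1,q1,p2,q2,p',q',b)"
         and i="\<lambda>(a,p1,q1,p2,q2,p',q',b). (b,p1,q1,p2,q2,p',q',a)"])
    apply (auto simp: mult_ac)
    done
  also have "\<dots> = (\<Sum>a\<in>UNIV. \<Sum>p1\<in>UNIV. \<Sum>q1\<in>UNIV. \<Sum>p2\<in>UNIV. \<Sum>q2\<in>UNIV. \<Sum>p'\<in>UNIV. \<Sum>q'\<in>UNIV.
      de x p1 a * Sa p' p2 * Sa q' q2 * mu p1 p2 p * mu q1 q2 q * (\<Sum>b\<in>UNIV. de a b p' * de b q1 q'))"
    by (simp only: coassoc[symmetric])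
  also have "\<dots> = (\<Sum>a\<in>UNIV. \<Sum>p1\<in>UNIV. \<Sum>p2\<in>UNIV. \<Sum>p'\<in>UNIV. \<Sum>b\<in>UNIV.
      de x p1 a * Sa p' p2 * mu p1 p2 p * de a b p' * (\<Sum>q1\<in>UNIV. \<Sum>q'\<in>UNIV. \<Sum>q2\<in>UNIV. de b q1 q' * Sa q' q2 * mu q1 q2 q))"
    apply (simp only: sum_distrib_left sum_distrib_right sum.cartesian_product)
    apply (rule sum.reindex_bij_witness[where j="\<lambda>(a,p1,q1,p2,q2,p',q',b). (a,p1,p2,p',b,q1,q',q2)"
         and i="\<lambda>(a,p1,p2,p',b,q1,q',q2). (a,p1,q1,p2,q2,p',q',b)"])
    apply (auto simp: mult_ac)
    done
  also have "\<dots> = (\<Sum>a\<in>UNIV. \<Sum>p1\<in>UNIV. \<Sum>p2\<in>UNIV. \<Sum>p'\<in>UNIV. \<Sum>b\<in>UNIV.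
      de x p1 a * Sa p' p2 * mu p1 p2 p * de a b p' * (eps b * u q))"
    by (simp only: antiR)
  also have "\<dots> = (\<Sum>a\<in>UNIV. \<Sum>p1\<in>UNIV. \<Sum>p2\<in>UNIV. \<Sum>p'\<in>UNIV.
      de x p1 a * Sa p' p2 * mu p1 p2 p * u q * (\<Sum>b\<in>UNIV. de a b p' * eps b))"
    by (simp add: sum_distrib_left mult_ac)
  also have "\<dots> = (\<Sum>a\<in>UNIV. \<Sum>p1\<in>UNIV. \<Sum>p2\<in>UNIV. de x p1 a * Sa a p2 * mu p1 p2 p * u q)"
    by (simp add: counitL sum.delta sum.delta')
  also have "\<dots> = (\<Sum>p1\<in>UNIV. \<Sum>a\<in>UNIV. \<Sum>p2\<in>UNIV. de x p1 a * Sa a p2 * mu p1 p2 p) * u q"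
    apply (simp only: sum_distrib_left sum_distrib_right sum.cartesian_product)
    apply (rule sum.reindex_bij_witness[where j="\<lambda>(a,p1,p2). (p1,a,p2)"
         and i="\<lambda>(p1,a,p2). (a,p1,p2)"])
    apply (auto simp: mult_ac)
    done
  also have "\<dots> = E x p q" by (simp only: antiR E_def)
  finally show ?thesis .
qed

lemma S_anticomult: "(\<Sum>a\<in>UNIV. Sa x a * de a p q) = (\<Sum>p'\<in>UNIV. \<Sum>q'\<in>UNIV. de x q' p' * Sa p' p * Sa q' q)"
proof -
  have LD: "conv Lm Dm = E" by (intro ext) (rule convLD)
  have DR: "conv Dm Rm = E" by (intro ext) (rule convDR)
  have "Lm x p q = conv Lm E x p q" by (simp add: conv_unitR)
  also have "\<dots> = conv (conv Lm Dm) Rm x p q" by (simp add: DR conv_assoc)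
  also have "\<dots> = Rm x p q" by (simp add: LD conv_unitL)
  finally show ?thesis by (simp add: Lm_def Rm_def)
qed


lemma dual: "hopf (\<lambda>b c a. de a b c) eps (\<lambda>a b c. mu b c a) u (\<lambda>a c. Sa c a)"
  unfolding hopf_def hopf_algebra_def
proof (intro conjI allI)
  fix a b c r
  show "(\<Sum>x\<in>UNIV. de x a b * de r x c) = (\<Sum>x\<in>UNIV. de x b c * de r a x)"
    using coassoc[of r c a b] by (simp add: mult_ac)
next
  fix a r show "(\<Sum>x\<in>UNIV. eps x * de r x a) = kron a r"
    using counitL[of r a] by (simp add: mult_ac kron_sym)
next
  fix a r show "(\<Sum>x\<in>UNIV. eps x * de r a x) = kron a r"
    using counitR[of r a] by (simp add: mult_ac kron_sym)
next
  fix a p q c show "(\<Sum>d\<in>UNIV. mu d c a * mu p q d) = (\<Sum>d\<in>UNIV. mu p d a * mu q c d)"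
    using assoc[of p q c a] by (simp add: mult_ac)
next
  fix a c show "(\<Sum>d\<in>UNIV. mu d c a * u d) = kron a c"
    using unitL[of c a] by (simp add: mult_ac kron_sym)
next
  fix a c show "(\<Sum>d\<in>UNIV. mu c d a * u d) = kron a c"
    using unitR[of c a] by (simp add: mult_ac kron_sym)
next
  fix a b p q
  have "(\<Sum>c\<in>UNIV. de c a b * mu p q c) = (\<Sum>c\<in>UNIV. mu p q c * de c a b)" by (simp add: mult_ac)
  also have "\<dots> = (\<Sum>p1\<in>UNIV. \<Sum>q1\<in>UNIV. \<Sum>p2\<in>UNIV. \<Sum>q2\<in>UNIV. de p p1 q1 * de q p2 q2 * mu p1 p2 a * mu q1 q2 b)"
    by (rule bialg)
  also have "\<dots> = (\<Sum>p1\<in>UNIV. \<Sum>q1\<in>UNIV. \<Sum>p2\<in>UNIV. \<Sum>q2\<in>UNIV. mu p1 q1 a * mu p2 q2 b * de p p1 p2 * de q q1 q2)"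
    apply (simp only: sum_distrib_left sum_distrib_right sum.cartesian_product)
    apply (rule sum.reindex_bij_witness[where j="\<lambda>(p1,q1,p2,q2). (p1,p2,q1,q2)"
         and i="\<lambda>(p1,p2,q1,q2). (p1,q1,p2,q2)"])
    apply (auto simp: mult_ac)
    done
  finally show "(\<Sum>c\<in>UNIV. de c a b * mu p q c) = (\<Sum>p1\<in>UNIV. \<Sum>q1\<in>UNIV. \<Sum>p2\<in>UNIV. \<Sum>q2\<in>UNIV. mu p1 q1 a * mu p2 q2 b * de p p1 p2 * de q q1 q2)" .
next
  fix p q show "(\<Sum>a\<in>UNIV. eps a * mu p q a) = eps p * eps q"
    using epsmu[of p q] by (simp add: mult_ac)
next
  fix a b show "(\<Sum>c\<in>UNIV. de c a b * u c) = u a * u b"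
    using deu[of a b] by (simp add: mult_ac)
next
  show "(\<Sum>a\<in>UNIV. eps a * u a) = 1" using ueps by (simp add: mult_ac)
next
  fix a r
  have "(\<Sum>d\<in>UNIV. \<Sum>c\<in>UNIV. \<Sum>x\<in>UNIV. mu d c a * Sa x d * de r x c) = (\<Sum>d\<in>UNIV. \<Sum>c\<in>UNIV. \<Sum>x\<in>UNIV. de r d c * Sa d x * mu x c a)"
    apply (simp only: sum_distrib_left sum_distrib_right sum.cartesian_product)
    apply (rule sum.reindex_bij_witness[where j="\<lambda>(d,c,x). (x,c,d)"
         and i="\<lambda>(x,c,d). (d,c,x)"])
    apply (auto simp: mult_ac)
    done
  also have "\<dots> = u a * eps r" unfolding antiL by (simp add: mult.commute)
  finally show "(\<Sum>d\<in>UNIV. \<Sum>c\<in>UNIV. \<Sum>x\<in>UNIV. mu d c a * Sa x d * de r x c) = u a * eps r" .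
next
  fix a r
  have "(\<Sum>d\<in>UNIV. \<Sum>c\<in>UNIV. \<Sum>y\<in>UNIV. mu d c a * Sa y c * de r d y) = (\<Sum>d\<in>UNIV. \<Sum>c\<in>UNIV. \<Sum>y\<in>UNIV. de r d c * Sa c y * mu d y a)"
    apply (simp only: sum_distrib_left sum_distrib_right sum.cartesian_product)
    apply (rule sum.reindex_bij_witness[where j="\<lambda>(d,c,y). (d,y,c)"
         and i="\<lambda>(d,y,c). (d,c,y)"])
    apply (auto simp: mult_ac)
    done
  also have "\<dots> = u a * eps r" unfolding antiR by (simp add: mult.commute)
  finally show "(\<Sum>d\<in>UNIV. \<Sum>c\<in>UNIV. \<Sum>y\<in>UNIV. mu d c a * Sa y c * de r d y) = u a * eps r" .
qed

lemma S_antimult: "(\<Sum>a\<in>UNIV. Sa a x * mu p q a) = (\<Sum>p'\<in>UNIV. \<Sum>q'\<in>UNIV. mu q' p' x * Sa p p' * Sa q q')"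
  using hopf.S_anticomult[OF dual, of x p q] .


lemma hopf_module_integral:
  fixes \<alpha> :: "'j::finite \<Rightarrow> 'i \<Rightarrow> 'j \<Rightarrow> 'k" and \<beta> :: "'j \<Rightarrow> 'j \<Rightarrow> 'i \<Rightarrow> 'k"
  assumes massoc: "\<And>m f g s. (\<Sum>r\<in>UNIV. \<alpha> m f r * \<alpha> r g s) = (\<Sum>h\<in>UNIV. mu f g h * \<alpha> m h s)"
    and munit: "\<And>m s. (\<Sum>f\<in>UNIV. u f * \<alpha> m f s) = kron m s"
    and cassoc: "\<And>m s g f. (\<Sum>r\<in>UNIV. \<beta> m r f * \<beta> r s g) = (\<Sum>h\<in>UNIV. \<beta> m s h * de h g f)"
    and ccounit: "\<And>m r. (\<Sum>f\<in>UNIV. \<beta> m r f * eps f) = kron m r"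
    and compat: "\<And>m f s g. (\<Sum>r\<in>UNIV. \<alpha> m f r * \<beta> r s g) =
        (\<Sum>r\<in>UNIV. \<Sum>h\<in>UNIV. \<Sum>f1\<in>UNIV. \<Sum>f2\<in>UNIV. \<beta> m r h * de f f1 f2 * \<alpha> r f1 s * mu h f2 g)"
  shows "\<exists>P::'j\<Rightarrow>'k. P \<noteq> (\<lambda>_. 0) \<and> (\<forall>s' g. (\<Sum>s\<in>UNIV. P s * \<beta> s s' g) = P s' * u g)"
proof -
  define Pm where "Pm m s = (\<Sum>r\<in>UNIV. \<Sum>f\<in>UNIV. \<Sum>t\<in>UNIV. \<beta> m r f * Sa f t * \<alpha> r t s)" for m s
  have coinv: "(\<Sum>s\<in>UNIV. Pm m s * \<beta> s s' g) = Pm m s' * u g" for m s' g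
  proof -
    have "(\<Sum>s\<in>UNIV. Pm m s * \<beta> s s' g) = (\<Sum>r\<in>UNIV. \<Sum>f\<in>UNIV. \<Sum>t\<in>UNIV. \<beta> m r f * Sa f t * (\<Sum>s\<in>UNIV. \<alpha> r t s * \<beta> s s' g))"
      unfolding Pm_def
    apply (simp only: sum_distrib_left sum_distrib_right sum.cartesian_product)
    apply (rule sum.reindex_bij_witness[where j="\<lambda>(s,r,f,t). (r,f,t,s)" and i="\<lambda>(r,f,t,s). (s,r,f,t)"])
    apply (auto simp: mult_ac)
    done
    also have "\<dots> = (\<Sum>r\<in>UNIV. \<Sum>f\<in>UNIV. \<Sum>t\<in>UNIV. \<beta> m r f * Sa f t *
        (\<Sum>r'\<in>UNIV. \<Sum>h\<in>UNIV. \<Sum>f1\<in>UNIV. \<Sum>f2\<in>UNIV. \<beta> r r' h * de t f1 f2 * \<alpha> r' f1 s' * mu h f2 g))"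
      by (simp only: compat)
    also have "\<dots> = (\<Sum>f\<in>UNIV. \<Sum>r'\<in>UNIV. \<Sum>h\<in>UNIV. \<Sum>f1\<in>UNIV. \<Sum>f2\<in>UNIV. \<alpha> r' f1 s' * mu h f2 g *
        (\<Sum>r\<in>UNIV. \<beta> m r f * \<beta> r r' h) * (\<Sum>t\<in>UNIV. Sa f t * de t f1 f2))"
    apply (simp only: sum_distrib_left sum_distrib_right sum.cartesian_product)
    apply (rule sum.reindex_bij_witness[where j="\<lambda>(r,f,t,r',h,f1,f2). (f,r',h,f1,f2,t,r)" and i="\<lambda>(f,r',h,f1,f2,t,r). (r,f,t,r',h,f1,f2)"])
    apply (auto simp: mult_ac)
    done
    also have "\<dots> = (\<Sum>f\<in>UNIV. \<Sum>r'\<in>UNIV. \<Sum>h\<in>UNIV. \<Sum>f1\<in>UNIV. \<Sum>f2\<in>UNIV. \<alpha> r' f1 s' * mu h f2 g *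
        (\<Sum>k\<in>UNIV. \<beta> m r' k * de k h f) * (\<Sum>p'\<in>UNIV. \<Sum>q'\<in>UNIV. de f q' p' * Sa p' f1 * Sa q' f2))"
      by (simp only: cassoc S_anticomult)
    also have "\<dots> = (\<Sum>k\<in>UNIV. \<Sum>r'\<in>UNIV. \<Sum>f1\<in>UNIV. \<Sum>p'\<in>UNIV. \<Sum>q'\<in>UNIV. \<Sum>h\<in>UNIV. \<Sum>f2\<in>UNIV.
         \<beta> m r' k * \<alpha> r' f1 s' * Sa p' f1 * Sa q' f2 * mu h f2 g * (\<Sum>f\<in>UNIV. de k h f * de f q' p'))"
    apply (simp only: sum_distrib_left sum_distrib_right sum.cartesian_product)
    apply (rule sum.reindex_bij_witness[where j="\<lambda>(f,r',h,f1,f2,(p',q'),k). (k,r',f1,p',q',h,f2,f)" and i="\<lambda>(k,r',f1,p',q',h,f2,f). (f,r',h,f1,f2,(p',q'),k)"])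
    apply (auto simp: mult_ac)
    done
    also have "\<dots> = (\<Sum>k\<in>UNIV. \<Sum>r'\<in>UNIV. \<Sum>f1\<in>UNIV. \<Sum>p'\<in>UNIV. \<Sum>q'\<in>UNIV. \<Sum>h\<in>UNIV. \<Sum>f2\<in>UNIV.
         \<beta> m r' k * \<alpha> r' f1 s' * Sa p' f1 * Sa q' f2 * mu h f2 g * (\<Sum>d\<in>UNIV. de k d p' * de d h q'))"
      by (simp only: coassoc[symmetric])
    also have "\<dots> = (\<Sum>k\<in>UNIV. \<Sum>r'\<in>UNIV. \<Sum>f1\<in>UNIV. \<Sum>p'\<in>UNIV. \<Sum>d\<in>UNIV.
         \<beta> m r' k * \<alpha> r' f1 s' * Sa p' f1 * de k d p' * (\<Sum>h\<in>UNIV. \<Sum>q'\<in>UNIV. \<Sum>f2\<in>UNIV. de d h q' * Sa q' f2 * mu h f2 g))"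
    apply (simp only: sum_distrib_left sum_distrib_right sum.cartesian_product)
    apply (rule sum.reindex_bij_witness[where j="\<lambda>(k,r',f1,p',q',h,f2,d). (k,r',f1,p',d,h,q',f2)" and i="\<lambda>(k,r',f1,p',d,h,q',f2). (k,r',f1,p',q',h,f2,d)"])
    apply (auto simp: mult_ac)
    done
    also have "\<dots> = (\<Sum>k\<in>UNIV. \<Sum>r'\<in>UNIV. \<Sum>f1\<in>UNIV. \<Sum>p'\<in>UNIV. \<Sum>d\<in>UNIV.
         \<beta> m r' k * \<alpha> r' f1 s' * Sa p' f1 * de k d p' * (eps d * u g))"
      by (simp only: antiR)
    also have "\<dots> = (\<Sum>k\<in>UNIV. \<Sum>r'\<in>UNIV. \<Sum>f1\<in>UNIV. \<Sum>p'\<in>UNIV.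
         \<beta> m r' k * \<alpha> r' f1 s' * Sa p' f1 * u g * (\<Sum>d\<in>UNIV. de k d p' * eps d))"
      by (simp add: sum_distrib_left mult_ac)
    also have "\<dots> = (\<Sum>k\<in>UNIV. \<Sum>r'\<in>UNIV. \<Sum>f1\<in>UNIV. \<beta> m r' k * \<alpha> r' f1 s' * Sa k f1 * u g)"
      by (simp add: counitL sum.delta sum.delta')
    also have "\<dots> = Pm m s' * u g"
      unfolding Pm_def
    apply (simp only: sum_distrib_left sum_distrib_right sum.cartesian_product)
    apply (rule sum.reindex_bij_witness[where j="\<lambda>(k,r',f1). (r',k,f1)" and i="\<lambda>(r',k,f1). (k,r',f1)"])
    apply (auto simp: mult_ac)
    done
    finally show ?thesis .
  qed
  have recon: "(\<Sum>r\<in>UNIV. \<Sum>f\<in>UNIV. \<beta> m r f * (\<Sum>s\<in>UNIV. Pm r s * \<alpha> s f t)) = kron m t" for m t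
  proof -
    have "(\<Sum>r\<in>UNIV. \<Sum>f\<in>UNIV. \<beta> m r f * (\<Sum>s\<in>UNIV. Pm r s * \<alpha> s f t)) =
       (\<Sum>f\<in>UNIV. \<Sum>r'\<in>UNIV. \<Sum>f'\<in>UNIV. \<Sum>t'\<in>UNIV. Sa f' t' * (\<Sum>r\<in>UNIV. \<beta> m r f * \<beta> r r' f') * (\<Sum>s\<in>UNIV. \<alpha> r' t' s * \<alpha> s f t))"
      unfolding Pm_def
    apply (simp only: sum_distrib_left sum_distrib_right sum.cartesian_product)
    apply (rule sum.reindex_bij_witness[where j="\<lambda>(r,f,s,r',f',t'). (f,r',f',t',s,r)" and i="\<lambda>(f,r',f',t',s,r). (r,f,s,r',f',t')"])
    apply (auto simp: mult_ac)
    done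
    also have "\<dots> = (\<Sum>f\<in>UNIV. \<Sum>r'\<in>UNIV. \<Sum>f'\<in>UNIV. \<Sum>t'\<in>UNIV. Sa f' t' * (\<Sum>k\<in>UNIV. \<beta> m r' k * de k f' f) * (\<Sum>h\<in>UNIV. mu t' f h * \<alpha> r' h t))"
      by (simp only: cassoc massoc)
    also have "\<dots> = (\<Sum>r'\<in>UNIV. \<Sum>k\<in>UNIV. \<Sum>h\<in>UNIV. \<beta> m r' k * \<alpha> r' h t * (\<Sum>f'\<in>UNIV. \<Sum>f\<in>UNIV. \<Sum>t'\<in>UNIV. de k f' f * Sa f' t' * mu t' f h))"
    apply (simp only: sum_distrib_left sum_distrib_right sum.cartesian_product)
    apply (rule sum.reindex_bij_witness[where j="\<lambda>(f,r',f',t',h,k). (r',k,h,f',f,t')" and i="\<lambda>(r',k,h,f',f,t'). (f,r',f',t',h,k)"])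
    apply (auto simp: mult_ac)
    done
    also have "\<dots> = (\<Sum>r'\<in>UNIV. \<Sum>k\<in>UNIV. \<Sum>h\<in>UNIV. \<beta> m r' k * \<alpha> r' h t * (eps k * u h))"
      by (simp only: antiL)
    also have "\<dots> = (\<Sum>r'\<in>UNIV. \<Sum>k\<in>UNIV. \<beta> m r' k * eps k * (\<Sum>h\<in>UNIV. u h * \<alpha> r' h t))"
    apply (simp only: sum_distrib_left sum_distrib_right sum.cartesian_product)
    apply (rule sum.reindex_bij_witness[where j="\<lambda>(r',k,h). (r',k,h)" and i="\<lambda>(r',k,h). (r',k,h)"])
    apply (auto simp: mult_ac)
    done
    also have "\<dots> = (\<Sum>k\<in>UNIV. \<beta> m t k * eps k)"
      by (simp add: munit sum.delta sum.delta')
    also have "\<dots> = kron m t" by (rule ccounit)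
    finally show ?thesis .
  qed
  have "\<exists>m. Pm m \<noteq> (\<lambda>_. 0)"
  proof (rule ccontr)
    assume "\<not> ?thesis"
    hence "Pm r = (\<lambda>_. 0)" for r by blast
    with recon[of undefined undefined] show False by (simp add: kron_def)
  qed
  then obtain m where "Pm m \<noteq> (\<lambda>_. 0)" by blast
  thus ?thesis using coinv by blast
qed


lemma left_integral: "\<exists>lam. lam \<noteq> (\<lambda>_. 0) \<and> (\<forall>a c. (\<Sum>b\<in>UNIV. mu a b c * lam b) = eps a * lam c)"
proof -
  define \<alpha> where "\<alpha> m f r = (\<Sum>q\<in>UNIV. de m r q * Sa q f)" for m f r
  define \<beta> where "\<beta> m r f = mu f m r" for m r f
  have massoc: "(\<Sum>r\<in>UNIV. \<alpha> m f r * \<alpha> r g s) = (\<Sum>h\<in>UNIV. de h f g * \<alpha> m h s)" for m f g s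
  proof -
    have "(\<Sum>h\<in>UNIV. de h f g * \<alpha> m h s) = (\<Sum>q\<in>UNIV. de m s q * (\<Sum>h\<in>UNIV. Sa q h * de h f g))"
      unfolding \<alpha>_def
    apply (simp only: sum_distrib_left sum_distrib_right sum.cartesian_product)
    apply (rule sum.reindex_bij_witness[where j="\<lambda>(h,q). (q,h)" and i="\<lambda>(q,h). (h,q)"])
    apply (auto simp: mult_ac)
    done
    also have "\<dots> = (\<Sum>q\<in>UNIV. de m s q * (\<Sum>p'\<in>UNIV. \<Sum>q'\<in>UNIV. de q q' p' * Sa p' f * Sa q' g))"
      by (simp only: S_anticomult)
    also have "\<dots> = (\<Sum>p'\<in>UNIV. \<Sum>q'\<in>UNIV. Sa p' f * Sa q' g * (\<Sum>q\<in>UNIV. de m s q * de q q' p'))"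
    apply (simp only: sum_distrib_left sum_distrib_right sum.cartesian_product)
    apply (rule sum.reindex_bij_witness[where j="\<lambda>(q,p',q'). (p',q',q)" and i="\<lambda>(p',q',q). (q,p',q')"])
    apply (auto simp: mult_ac)
    done
    also have "\<dots> = (\<Sum>p'\<in>UNIV. \<Sum>q'\<in>UNIV. Sa p' f * Sa q' g * (\<Sum>d\<in>UNIV. de m d p' * de d s q'))"
      by (simp only: coassoc[symmetric])
    also have "\<dots> = (\<Sum>r\<in>UNIV. \<alpha> m f r * \<alpha> r g s)"
      unfolding \<alpha>_def
    apply (simp only: sum_distrib_left sum_distrib_right sum.cartesian_product)
    apply (rule sum.reindex_bij_witness[where j="\<lambda>(p',q',d). (d,q',p')" and i="\<lambda>(d,q',p'). (p',q',d)"])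
    apply (auto simp: mult_ac)
    done
    finally show ?thesis by simp
  qed
  have munit: "(\<Sum>f\<in>UNIV. eps f * \<alpha> m f s) = kron m s" for m s
  proof -
    have "(\<Sum>f\<in>UNIV. eps f * \<alpha> m f s) = (\<Sum>q\<in>UNIV. de m s q * (\<Sum>f\<in>UNIV. Sa q f * eps f))"
      unfolding \<alpha>_def
    apply (simp only: sum_distrib_left sum_distrib_right sum.cartesian_product)
    apply (rule sum.reindex_bij_witness[where j="\<lambda>(f,q). (q,f)" and i="\<lambda>(q,f). (f,q)"])
    apply (auto simp: mult_ac)
    done
    also have "\<dots> = kron m s" by (simp only: epsS counitR)
    finally show ?thesis .
  qed
  have cassoc: "(\<Sum>r\<in>UNIV. \<beta> m r f * \<beta> r s g) = (\<Sum>h\<in>UNIV. \<beta> m s h * mu g f h)" for m s g f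
    unfolding \<beta>_def using assoc[of g f m s] by (simp add: mult_ac)
  have ccounit: "(\<Sum>f\<in>UNIV. \<beta> m r f * u f) = kron m r" for m r
    unfolding \<beta>_def using unitL[of m r] by (simp add: mult_ac)
  have compat: "(\<Sum>r\<in>UNIV. \<alpha> m f r * \<beta> r s g) =
        (\<Sum>r\<in>UNIV. \<Sum>h\<in>UNIV. \<Sum>f1\<in>UNIV. \<Sum>f2\<in>UNIV. \<beta> m r h * mu f1 f2 f * \<alpha> r f1 s * de g h f2)" for m f s g
  proof -
    have "(\<Sum>r\<in>UNIV. \<Sum>h\<in>UNIV. \<Sum>f1\<in>UNIV. \<Sum>f2\<in>UNIV. \<beta> m r h * mu f1 f2 f * \<alpha> r f1 s * de g h f2)
      = (\<Sum>h\<in>UNIV. \<Sum>f1\<in>UNIV. \<Sum>f2\<in>UNIV. \<Sum>q\<in>UNIV. mu f1 f2 f * Sa q f1 * de g h f2 * (\<Sum>r\<in>UNIV. mu h m r * de r s q))"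
      unfolding \<alpha>_def \<beta>_def
    apply (simp only: sum_distrib_left sum_distrib_right sum.cartesian_product)
    apply (rule sum.reindex_bij_witness[where j="\<lambda>(r,h,f1,f2,q). (h,f1,f2,q,r)" and i="\<lambda>(h,f1,f2,q,r). (r,h,f1,f2,q)"])
    apply (auto simp: mult_ac)
    done
    also have "\<dots> = (\<Sum>h\<in>UNIV. \<Sum>f1\<in>UNIV. \<Sum>f2\<in>UNIV. \<Sum>q\<in>UNIV. mu f1 f2 f * Sa q f1 * de g h f2 *
        (\<Sum>p1\<in>UNIV. \<Sum>q1\<in>UNIV. \<Sum>p2\<in>UNIV. \<Sum>q2\<in>UNIV. de h p1 q1 * de m p2 q2 * mu p1 p2 s * mu q1 q2 q))"
      by (simp only: bialg)
    also have "\<dots> = (\<Sum>h\<in>UNIV. \<Sum>f1\<in>UNIV. \<Sum>f2\<in>UNIV. \<Sum>p1\<in>UNIV. \<Sum>q1\<in>UNIV. \<Sum>p2\<in>UNIV. \<Sum>q2\<in>UNIV.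
        mu f1 f2 f * de g h f2 * de h p1 q1 * de m p2 q2 * mu p1 p2 s * (\<Sum>q\<in>UNIV. Sa q f1 * mu q1 q2 q))"
    apply (simp only: sum_distrib_left sum_distrib_right sum.cartesian_product)
    apply (rule sum.reindex_bij_witness[where j="\<lambda>(h,f1,f2,q,p1,q1,p2,q2). (h,f1,f2,p1,q1,p2,q2,q)" and i="\<lambda>(h,f1,f2,p1,q1,p2,q2,q). (h,f1,f2,q,p1,q1,p2,q2)"])
    apply (auto simp: mult_ac)
    done
    also have "\<dots> = (\<Sum>h\<in>UNIV. \<Sum>f1\<in>UNIV. \<Sum>f2\<in>UNIV. \<Sum>p1\<in>UNIV. \<Sum>q1\<in>UNIV. \<Sum>p2\<in>UNIV. \<Sum>q2\<in>UNIV.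
        mu f1 f2 f * de g h f2 * de h p1 q1 * de m p2 q2 * mu p1 p2 s * (\<Sum>p'\<in>UNIV. \<Sum>q'\<in>UNIV. mu q' p' f1 * Sa q1 p' * Sa q2 q'))"
      by (simp only: S_antimult)
    also have "\<dots> = (\<Sum>h\<in>UNIV. \<Sum>f2\<in>UNIV. \<Sum>p1\<in>UNIV. \<Sum>q1\<in>UNIV. \<Sum>p2\<in>UNIV. \<Sum>q2\<in>UNIV. \<Sum>p'\<in>UNIV. \<Sum>q'\<in>UNIV.
        de g h f2 * de h p1 q1 * de m p2 q2 * mu p1 p2 s * Sa q1 p' * Sa q2 q' * (\<Sum>f1\<in>UNIV. mu q' p' f1 * mu f1 f2 f))"
    apply (simp only: sum_distrib_left sum_distrib_right sum.cartesian_product)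
    apply (rule sum.reindex_bij_witness[where j="\<lambda>(h,f1,f2,p1,q1,p2,q2,p',q'). (h,f2,p1,q1,p2,q2,p',q',f1)" and i="\<lambda>(h,f2,p1,q1,p2,q2,p',q',f1). (h,f1,f2,p1,q1,p2,q2,p',q')"])
    apply (auto simp: mult_ac)
    done
    also have "\<dots> = (\<Sum>h\<in>UNIV. \<Sum>f2\<in>UNIV. \<Sum>p1\<in>UNIV. \<Sum>q1\<in>UNIV. \<Sum>p2\<in>UNIV. \<Sum>q2\<in>UNIV. \<Sum>p'\<in>UNIV. \<Sum>q'\<in>UNIV.
        de g h f2 * de h p1 q1 * de m p2 q2 * mu p1 p2 s * Sa q1 p' * Sa q2 q' * (\<Sum>x\<in>UNIV. mu p' f2 x * mu q' x f))"
      by (simp only: assoc)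
    also have "\<dots> = (\<Sum>f2\<in>UNIV. \<Sum>p1\<in>UNIV. \<Sum>q1\<in>UNIV. \<Sum>p2\<in>UNIV. \<Sum>q2\<in>UNIV. \<Sum>p'\<in>UNIV. \<Sum>q'\<in>UNIV. \<Sum>x\<in>UNIV.
        de m p2 q2 * mu p1 p2 s * Sa q1 p' * Sa q2 q' * mu p' f2 x * mu q' x f * (\<Sum>h\<in>UNIV. de g h f2 * de h p1 q1))"
    apply (simp only: sum_distrib_left sum_distrib_right sum.cartesian_product)
    apply (rule sum.reindex_bij_witness[where j="\<lambda>(h,f2,p1,q1,p2,q2,p',q',x). (f2,p1,q1,p2,q2,p',q',x,h)" and i="\<lambda>(f2,p1,q1,p2,q2,p',q',x,h). (h,f2,p1,q1,p2,q2,p',q',x)"])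
    apply (auto simp: mult_ac)
    done
    also have "\<dots> = (\<Sum>f2\<in>UNIV. \<Sum>p1\<in>UNIV. \<Sum>q1\<in>UNIV. \<Sum>p2\<in>UNIV. \<Sum>q2\<in>UNIV. \<Sum>p'\<in>UNIV. \<Sum>q'\<in>UNIV. \<Sum>x\<in>UNIV.
        de m p2 q2 * mu p1 p2 s * Sa q1 p' * Sa q2 q' * mu p' f2 x * mu q' x f * (\<Sum>h\<in>UNIV. de g p1 h * de h q1 f2))"
      by (simp only: coassoc)
    also have "\<dots> = (\<Sum>p1\<in>UNIV. \<Sum>p2\<in>UNIV. \<Sum>q2\<in>UNIV. \<Sum>q'\<in>UNIV. \<Sum>x\<in>UNIV. \<Sum>h\<in>UNIV.
        de m p2 q2 * mu p1 p2 s * Sa q2 q' * mu q' x f * de g p1 h * (\<Sum>q1\<in>UNIV. \<Sum>f2\<in>UNIV. \<Sum>p'\<in>UNIV. de h q1 f2 * Sa q1 p' * mu p' f2 x))"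
    apply (simp only: sum_distrib_left sum_distrib_right sum.cartesian_product)
    apply (rule sum.reindex_bij_witness[where j="\<lambda>(f2,p1,q1,p2,q2,p',q',x,h). (p1,p2,q2,q',x,h,q1,f2,p')" and i="\<lambda>(p1,p2,q2,q',x,h,q1,f2,p'). (f2,p1,q1,p2,q2,p',q',x,h)"])
    apply (auto simp: mult_ac)
    done
    also have "\<dots> = (\<Sum>p1\<in>UNIV. \<Sum>p2\<in>UNIV. \<Sum>q2\<in>UNIV. \<Sum>q'\<in>UNIV. \<Sum>x\<in>UNIV. \<Sum>h\<in>UNIV.
        de m p2 q2 * mu p1 p2 s * Sa q2 q' * mu q' x f * de g p1 h * (eps h * u x))"
      by (simp only: antiL)
    also have "\<dots> = (\<Sum>p1\<in>UNIV. \<Sum>p2\<in>UNIV. \<Sum>q2\<in>UNIV. \<Sum>q'\<in>UNIV. \<Sum>x\<in>UNIV.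
        de m p2 q2 * mu p1 p2 s * Sa q2 q' * mu q' x f * u x * (\<Sum>h\<in>UNIV. de g p1 h * eps h))"
      by (simp add: sum_distrib_left mult_ac)
    also have "\<dots> = (\<Sum>p2\<in>UNIV. \<Sum>q2\<in>UNIV. \<Sum>q'\<in>UNIV. \<Sum>x\<in>UNIV.
        de m p2 q2 * mu g p2 s * Sa q2 q' * mu q' x f * u x)"
      by (simp add: counitR sum.delta sum.delta')
    also have "\<dots> = (\<Sum>p2\<in>UNIV. \<Sum>q2\<in>UNIV. \<Sum>q'\<in>UNIV.
        de m p2 q2 * mu g p2 s * Sa q2 q' * (\<Sum>x\<in>UNIV. u x * mu q' x f))"
      by (simp add: sum_distrib_left mult_ac)
    also have "\<dots> = (\<Sum>p2\<in>UNIV. \<Sum>q2\<in>UNIV. de m p2 q2 * mu g p2 s * Sa q2 f)"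
      by (simp add: unitR sum.delta sum.delta')
    also have "\<dots> = (\<Sum>r\<in>UNIV. \<alpha> m f r * \<beta> r s g)"
      unfolding \<alpha>_def \<beta>_def
    apply (simp only: sum_distrib_left sum_distrib_right sum.cartesian_product)
    apply (rule sum.reindex_bij_witness[where j="\<lambda>(p2,q2). (p2,q2)" and i="\<lambda>(p2,q2). (p2,q2)"])
    apply (auto simp: mult_ac)
    done
    finally show ?thesis by simp
  qed
  obtain P :: "'i \<Rightarrow> 'k" where P: "P \<noteq> (\<lambda>_. 0)" "\<And>s' g. (\<Sum>s\<in>UNIV. P s * \<beta> s s' g) = P s' * eps g"
    using hopf.hopf_module_integral[OF dual, of \<alpha> \<beta>] massoc munit cassoc ccounit compat by blast
  show ?thesis
    apply (rule exI[of _ P])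
    using P unfolding \<beta>_def by (simp add: mult_ac)
qed

end



lemma enum_idx: "distinct (enum_idx :: 'i::finite list) \<and> set (enum_idx :: 'i list) = UNIV"
proof -
  have "\<exists>xs::'i list. distinct xs \<and> set xs = UNIV"
    using finite_distinct_list[OF finite_UNIV] by metis
  thus ?thesis unfolding enum_idx_def by (rule someI_ex)
qed

lemma sum_enum: "sum_list (map c (enum_idx::'i::finite list)) = sum c UNIV"
proof -
  have "distinct (enum_idx::'i list)" "set (enum_idx::'i list) = UNIV" using enum_idx by auto
  thus ?thesis by (metis sum_list_distinct_conv_sum_set)
qed

locale bm =
  fixes N :: "('b::ring_1, 'm) bmod"
  assumes BM: "bmodule N"
begin

lemmas B = BM[unfolded bmodule_def]

lemma zero_closed[simp]: "mzero N \<in> carrier N" using B[THEN conjunct1] by blast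
lemma add_closed[simp]: "x \<in> carrier N \<Longrightarrow> y \<in> carrier N \<Longrightarrow> madd N x y \<in> carrier N" using B[THEN conjunct2, THEN conjunct1] by blast
lemma act_closed[simp]: "x \<in> carrier N \<Longrightarrow> act N b x \<in> carrier N" using B[THEN conjunct2, THEN conjunct2, THEN conjunct1] by blast
lemma add_assoc: "x \<in> carrier N \<Longrightarrow> y \<in> carrier N \<Longrightarrow> z \<in> carrier N \<Longrightarrow> madd N (madd N x y) z = madd N x (madd N y z)"
  using B[THEN conjunct2, THEN conjunct2, THEN conjunct2, THEN conjunct1] by blast
lemma add_comm: "x \<in> carrier N \<Longrightarrow> y \<in> carrier N \<Longrightarrow> madd N x y = madd N y x" using B[THEN conjunct2, THEN conjunct2, THEN conjunct2, THEN conjunct2, THEN conjunct1] by blast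
lemma add_zero_left[simp]: "x \<in> carrier N \<Longrightarrow> madd N (mzero N) x = x" using B[THEN conjunct2, THEN conjunct2, THEN conjunct2, THEN conjunct2, THEN conjunct2, THEN conjunct1] by blast
lemma add_zero_right[simp]: "x \<in> carrier N \<Longrightarrow> madd N x (mzero N) = x" using add_comm[of x "mzero N"] by simp
lemma inverse: "x \<in> carrier N \<Longrightarrow> \<exists>y\<in>carrier N. madd N x y = mzero N" using B[THEN conjunct2, THEN conjunct2, THEN conjunct2, THEN conjunct2, THEN conjunct2, THEN conjunct2, THEN conjunct1] by blast
lemma act_add: "x \<in> carrier N \<Longrightarrow> y \<in> carrier N \<Longrightarrow> act N b (madd N x y) = madd N (act N b x) (act N b y)"
  using B[THEN conjunct2, THEN conjunct2, THEN conjunct2, THEN conjunct2, THEN conjunct2, THEN conjunct2, THEN conjunct2, THEN conjunct1] by blast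
lemma add_act: "x \<in> carrier N \<Longrightarrow> act N (a + b) x = madd N (act N a x) (act N b x)" using B[THEN conjunct2, THEN conjunct2, THEN conjunct2, THEN conjunct2, THEN conjunct2, THEN conjunct2, THEN conjunct2, THEN conjunct2, THEN conjunct1] by blast
lemma act_mult: "x \<in> carrier N \<Longrightarrow> act N (a * b) x = act N a (act N b x)" using B[THEN conjunct2, THEN conjunct2, THEN conjunct2, THEN conjunct2, THEN conjunct2, THEN conjunct2, THEN conjunct2, THEN conjunct2, THEN conjunct2, THEN conjunct1] by blast
lemma act_one[simp]: "x \<in> carrier N \<Longrightarrow> act N 1 x = x" using B[THEN conjunct2, THEN conjunct2, THEN conjunct2, THEN conjunct2, THEN conjunct2, THEN conjunct2, THEN conjunct2, THEN conjunct2, THEN conjunct2, THEN conjunct2] by blast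

lemma idem_zero: assumes "z \<in> carrier N" "madd N z z = z" shows "z = mzero N"
proof -
  obtain y where y: "y \<in> carrier N" "madd N z y = mzero N" using inverse[OF assms(1)] by blast
  have "madd N (madd N z z) y = madd N z (madd N z y)" using add_assoc y assms(1) by blast
  thus ?thesis using y assms by simp
qed

lemma act_zero[simp]: "x \<in> carrier N \<Longrightarrow> act N 0 x = mzero N"
  using idem_zero[of "act N 0 x"] add_act[of x 0 0] by simp

lemma act_mzero[simp]: "act N b (mzero N) = mzero N"
  using idem_zero[of "act N b (mzero N)"] act_add[of "mzero N" "mzero N" b] by simp

definition lsum :: "'i list \<Rightarrow> ('i \<Rightarrow> 'm) \<Rightarrow> 'm" where
  "lsum xs f = foldr (\<lambda>i s. madd N (f i) s) xs (mzero N)"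

lemma lsum_simps[simp]: "lsum [] f = mzero N" "lsum (i # xs) f = madd N (f i) (lsum xs f)"
  by (simp_all add: lsum_def)

lemma lsum_closed[simp]: "(\<And>i. f i \<in> carrier N) \<Longrightarrow> lsum xs f \<in> carrier N"
  by (induction xs) auto

lemma lsum_act_const: "x \<in> carrier N \<Longrightarrow> lsum xs (\<lambda>i. act N (c i) x) = act N (sum_list (map c xs)) x"
  by (induction xs) (auto simp: add_act)

lemma lsum_act: "(\<And>i. f i \<in> carrier N) \<Longrightarrow> act N b (lsum xs f) = lsum xs (\<lambda>i. act N b (f i))"
  by (induction xs) (auto simp: act_add)

lemma lsum_add: "(\<And>i. f i \<in> carrier N) \<Longrightarrow> (\<And>i. g i \<in> carrier N) \<Longrightarrow>
   lsum xs (\<lambda>i. madd N (f i) (g i)) = madd N (lsum xs f) (lsum xs g)"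
proof (induction xs)
  case Nil then show ?case by simp
next
  case (Cons a xs)
  let ?F = "lsum xs f" and ?G = "lsum xs g"
  have c: "?F \<in> carrier N" "?G \<in> carrier N" "f a \<in> carrier N" "g a \<in> carrier N" using Cons.prems by auto
  have "lsum (a # xs) (\<lambda>i. madd N (f i) (g i)) = madd N (madd N (f a) (g a)) (madd N ?F ?G)"
    using Cons by simp
  also have "\<dots> = madd N (f a) (madd N (g a) (madd N ?F ?G))" using c add_assoc by simp
  also have "madd N (g a) (madd N ?F ?G) = madd N ?F (madd N (g a) ?G)"
    using c add_assoc add_comm by metis
  also have "madd N (f a) (madd N ?F (madd N (g a) ?G)) = madd N (madd N (f a) ?F) (madd N (g a) ?G)"
    using c add_assoc by simp
  finally show ?case by simp
qed

lemma lsum_zero[simp]: "lsum xs (\<lambda>i. mzero N) = mzero N"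
  by (induction xs) auto

lemma lsum_swap: "(\<And>i j. F i j \<in> carrier N) \<Longrightarrow>
   lsum xs (\<lambda>i. lsum ys (\<lambda>j. F i j)) = lsum ys (\<lambda>j. lsum xs (\<lambda>i. F i j))"
proof (induction xs)
  case Nil then show ?case by simp
next
  case (Cons a xs)
  have "lsum (a # xs) (\<lambda>i. lsum ys (\<lambda>j. F i j)) = madd N (lsum ys (\<lambda>j. F a j)) (lsum ys (\<lambda>j. lsum xs (\<lambda>i. F i j)))"
    using Cons by simp
  also have "\<dots> = lsum ys (\<lambda>j. madd N (F a j) (lsum xs (\<lambda>i. F i j)))"
    using Cons.prems by (intro lsum_add[symmetric]) auto
  finally show ?case by simp
qed

lemma lsum_delta: "distinct xs \<Longrightarrow> c \<in> set xs \<Longrightarrow> y \<in> carrier N \<Longrightarrow>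
   lsum xs (\<lambda>j. if j = c then y else mzero N) = y"
proof (induction xs)
  case Nil then show ?case by simp
next
  case (Cons a xs)
  show ?case
  proof (cases "a = c")
    case True
    with Cons.prems have "c \<notin> set xs" by auto
    hence "lsum xs (\<lambda>j. if j = c then y else mzero N) = lsum xs (\<lambda>j. mzero N)"
      by (induction xs) auto
    with True Cons.prems show ?thesis by simp
  next
    case False
    with Cons show ?thesis by simp
  qed
qed

lemma msum_lsum: "msum N f = lsum enum_idx f"
  by (simp add: msum_def lsum_def)

lemma msum_closed[simp]: "(\<And>i. f i \<in> carrier N) \<Longrightarrow> msum N f \<in> carrier N"
  by (simp add: msum_lsum)

lemma msum_act_const: "x \<in> carrier N \<Longrightarrow> msum N (\<lambda>i. act N (c i) x) = act N (\<Sum>i\<in>UNIV. c i) x"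
  by (simp add: msum_lsum lsum_act_const sum_enum)

lemma msum_act: "(\<And>i. f i \<in> carrier N) \<Longrightarrow> act N b (msum N f) = msum N (\<lambda>i. act N b (f i))"
  by (simp add: msum_lsum lsum_act)

lemma msum_add: "(\<And>i. f i \<in> carrier N) \<Longrightarrow> (\<And>i. g i \<in> carrier N) \<Longrightarrow>
   msum N (\<lambda>i. madd N (f i) (g i)) = madd N (msum N f) (msum N g)"
  by (simp add: msum_lsum lsum_add)

lemma msum_swap: "(\<And>i j. F i j \<in> carrier N) \<Longrightarrow>
   msum N (\<lambda>i. msum N (\<lambda>j. F i j)) = msum N (\<lambda>j. msum N (\<lambda>i. F i j))"
  unfolding msum_lsum by (rule lsum_swap)

lemma msum_delta: "y \<in> carrier N \<Longrightarrow> msum N (\<lambda>j::'i::finite. if j = c then y else mzero N) = y"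
  using enum_idx[where 'i='i] lsum_delta[of "enum_idx::'i list"] by (simp add: msum_lsum)

lemma msum_zero[simp]: "msum N (\<lambda>i. mzero N) = mzero N"
  by (simp add: msum_lsum)

lemma msum_lin: assumes "\<And>j. x j \<in> carrier N"
  shows "msum N (\<lambda>i. msum N (\<lambda>j. act N (F i j) (x j))) = msum N (\<lambda>j. act N (\<Sum>i\<in>UNIV. F i j) (x j))"
proof -
  have "msum N (\<lambda>i. msum N (\<lambda>j. act N (F i j) (x j))) = msum N (\<lambda>j. msum N (\<lambda>i. act N (F i j) (x j)))"
    using assms by (intro msum_swap) simp
  also have "\<dots> = msum N (\<lambda>j. act N (\<Sum>i\<in>UNIV. F i j) (x j))"
    using assms by (simp add: msum_act_const)
  finally show ?thesis .
qed

lemma act_lin: assumes "\<And>j. x j \<in> carrier N"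
  shows "act N b (msum N (\<lambda>j. act N (c j) (x j))) = msum N (\<lambda>j. act N (b * c j) (x j))"
  using assms by (simp add: msum_act act_mult)

end




locale kalg =
  fixes scB :: "'k::field \<Rightarrow> 'b::ring_1 \<Rightarrow> 'b"
  assumes KA: "k_algebra scB"
begin
lemmas KAs = KA[unfolded k_algebra_def]
lemma sc_add: "scB c (x + y) = scB c x + scB c y" using KAs by blast
lemma sc_addk: "scB (c + d) x = scB c x + scB d x" using KAs by blast
lemma sc_mult: "scB (c * d) x = scB c (scB d x)" using KAs by blast
lemma sc_one[simp]: "scB 1 x = x" using KAs by blast
lemma sc_multL: "scB c (x * y) = scB c x * y" using KAs by blast
lemma sc_multR: "scB c (x * y) = x * scB c y" using KAs by blast
lemma sc_zerok[simp]: "scB 0 x = 0"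
  using sc_addk[of 0 0 x] by simp
lemma sc_zero[simp]: "scB c 0 = 0"
  using sc_add[of c 0 0] by simp
lemma sc_sumk: "scB (\<Sum>i\<in>A. f i) x = (\<Sum>i\<in>A. scB (f i) x)"
  by (induction A rule: infinite_finite_induct) (auto simp: sc_addk)
lemma sc_sum: "scB c (\<Sum>i\<in>A. f i) = (\<Sum>i\<in>A. scB c (f i))"
  by (induction A rule: infinite_finite_induct) (auto simp: sc_add)
lemma sc_prod: "scB c x * scB d y = scB (c * d) (x * y)"
proof -
  have "scB c x * scB d y = scB c (x * scB d y)" by (simp add: sc_multL)
  also have "x * scB d y = scB d (x * y)" by (simp add: sc_multR)
  finally show ?thesis by (simp add: sc_mult)
qed
end

locale setting = hopf mu u de eps Sa + kalg scB
  for mu :: "'i::finite \<Rightarrow> 'i \<Rightarrow> 'i \<Rightarrow> 'k::field" and u de eps Sa and scB :: "'k \<Rightarrow> 'b::ring_1 \<Rightarrow> 'b" +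
  fixes dB :: "'b \<Rightarrow> 'i \<Rightarrow> 'b"
  assumes CA: "comodule_algebra scB mu u de eps dB"
begin
lemmas CAs = CA[unfolded comodule_algebra_def]
lemma dB_add: "dB (x + y) i = dB x i + dB y i" using CAs by blast
lemma dB_mult: "dB (x * y) r = (\<Sum>i\<in>UNIV. \<Sum>j\<in>UNIV. scB (mu i j r) (dB x i * dB y j))" using CAs by blast
lemma dB_one: "dB 1 r = scB (u r) 1" using CAs by blast
lemma dB_counit: "(\<Sum>i\<in>UNIV. scB (eps i) (dB x i)) = x" using CAs by blast

definition Kc :: "'b \<Rightarrow> 'i \<Rightarrow> 'i \<Rightarrow> 'b" where
  "Kc b c j = (\<Sum>i\<in>UNIV. scB (mu i j c) (dB b i))"

lemma K1: "Kc (a * b) c l = (\<Sum>j\<in>UNIV. Kc a c j * Kc b j l)"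
proof -
  have "Kc (a * b) c l = (\<Sum>k\<in>UNIV. \<Sum>m\<in>UNIV. \<Sum>i\<in>UNIV. scB (mu k m i * mu i l c) (dB a k * dB b m))"
    unfolding Kc_def dB_mult
    apply (simp only: sc_sum sc_mult[symmetric] sum.cartesian_product)
    apply (rule sum.reindex_bij_witness[where j="\<lambda>(i,k,m). (k,m,i)" and i="\<lambda>(k,m,i). (i,k,m)"])
    apply (auto simp: mult_ac sc_mult[symmetric])
    done
  also have "\<dots> = (\<Sum>k\<in>UNIV. \<Sum>m\<in>UNIV. scB (\<Sum>i\<in>UNIV. mu k m i * mu i l c) (dB a k * dB b m))"
    by (simp only: sc_sumk)
  also have "\<dots> = (\<Sum>k\<in>UNIV. \<Sum>m\<in>UNIV. scB (\<Sum>j\<in>UNIV. mu m l j * mu k j c) (dB a k * dB b m))"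
    by (simp only: assoc)
  also have "\<dots> = (\<Sum>j\<in>UNIV. Kc a c j * Kc b j l)"
    unfolding Kc_def
    apply (simp only: sc_sumk sum_distrib_left sum_distrib_right sc_prod sum.cartesian_product)
    apply (rule sum.reindex_bij_witness[where j="\<lambda>(k,m,j). (j,m,k)" and i="\<lambda>(j,m,k). (k,m,j)"])
    apply (auto simp: mult_ac)
    done
  finally show ?thesis .
qed

lemma K2: "Kc 1 c j = scB (kron j c) 1"
proof -
  have "Kc 1 c j = scB (\<Sum>i\<in>UNIV. u i * mu i j c) 1"
    unfolding Kc_def dB_one by (simp add: sc_sumk sc_mult[symmetric] mult_ac)
  thus ?thesis by (simp only: unitL)
qed

lemma K3: "Kc (a + b) c j = Kc a c j + Kc b c j"
  unfolding Kc_def dB_add sc_add by (simp add: sum.distrib)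

lemma K4: "(\<Sum>c\<in>UNIV. scB (eps c) 1 * Kc b c j) = b * scB (eps j) 1"
proof -
  have "(\<Sum>c\<in>UNIV. scB (eps c) 1 * Kc b c j) = (\<Sum>i\<in>UNIV. scB (\<Sum>c\<in>UNIV. mu i j c * eps c) (dB b i))"
    unfolding Kc_def
    apply (simp only: sc_sumk sum_distrib_left sc_prod sum.cartesian_product mult_1_left)
    apply (rule sum.reindex_bij_witness[where j="\<lambda>(c,i). (i,c)" and i="\<lambda>(i,c). (c,i)"])
    apply (auto simp: mult_ac)
    done
  also have "\<dots> = (\<Sum>i\<in>UNIV. scB (eps j) (scB (eps i) (dB b i)))"
    by (simp only: epsmu sc_mult mult.commute[of "eps _" "eps j"])
  also have "\<dots> = scB (eps j) b" by (simp only: sc_sum[symmetric] dB_counit)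
  also have "\<dots> = b * scB (eps j) 1" using sc_multR[of "eps j" b 1] by simp
  finally show ?thesis .
qed

lemma K5: assumes lam: "\<And>i c. (\<Sum>j\<in>UNIV. mu i j c * lam j) = eps i * lam c"
  shows "(\<Sum>j\<in>UNIV. Kc b c j * scB (lam j) 1) = scB (lam c) 1 * b"
proof -
  have "(\<Sum>j\<in>UNIV. Kc b c j * scB (lam j) 1) = (\<Sum>i\<in>UNIV. scB (\<Sum>j\<in>UNIV. mu i j c * lam j) (dB b i))"
    unfolding Kc_def
    apply (simp only: sc_sumk sum_distrib_right sc_prod sum.cartesian_product mult_1_right)
    apply (rule sum.reindex_bij_witness[where j="\<lambda>(j,i). (i,j)" and i="\<lambda>(i,j). (j,i)"])
    apply (auto simp: mult_ac)
    done
  also have "\<dots> = (\<Sum>i\<in>UNIV. scB (lam c) (scB (eps i) (dB b i)))"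
    by (simp only: lam sc_mult mult.commute[of "eps _" "lam c"])
  also have "\<dots> = scB (lam c) b" by (simp only: sc_sum[symmetric] dB_counit)
  also have "\<dots> = scB (lam c) 1 * b" using sc_multL[of "lam c" 1 b] by simp
  finally show ?thesis .
qed


abbreviation "TH N \<equiv> tensH scB mu dB N"

lemma TH_simps: "carrier (TH N) = {x. \<forall>i. x i \<in> carrier N}"
  "madd (TH N) x y = (\<lambda>i. madd N (x i) (y i))" "mzero (TH N) = (\<lambda>i. mzero N)"
  by (simp_all add: tensH_def)

lemma TH_act: assumes "bmodule N" "\<And>j. x j \<in> carrier N"
  shows "act (TH N) b x c = msum N (\<lambda>j. act N (Kc b c j) (x j))"
proof -
  interpret bm N by (rule bm.intro) fact
  show ?thesis unfolding tensH_def Kc_def using msum_lin[OF assms(2)] by simp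
qed

lemma TH_bmodule: assumes "bmodule N" shows "bmodule (TH N)"
proof -
  interpret bm N by (rule bm.intro) fact
  note A = TH_act[OF assms]
  have C: "x \<in> carrier (TH N) \<longleftrightarrow> (\<forall>i. x i \<in> carrier N)" for x by (simp add: TH_simps)
  show ?thesis unfolding bmodule_def
  proof (intro conjI ballI allI)
    show "mzero (TH N) \<in> carrier (TH N)" by (simp add: TH_simps)
  next
    fix x y assume "x \<in> carrier (TH N)" "y \<in> carrier (TH N)"
    thus "madd (TH N) x y \<in> carrier (TH N)" by (simp add: TH_simps)
  next
    fix b x assume "x \<in> carrier (TH N)"
    thus "act (TH N) b x \<in> carrier (TH N)" by (simp add: C A)
  next
    fix x y z assume "x \<in> carrier (TH N)" "y \<in> carrier (TH N)" "z \<in> carrier (TH N)"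
    thus "madd (TH N) (madd (TH N) x y) z = madd (TH N) x (madd (TH N) y z)" by (simp add: TH_simps add_assoc)
  next
    fix x y assume "x \<in> carrier (TH N)" "y \<in> carrier (TH N)"
    thus "madd (TH N) x y = madd (TH N) y x" by (simp add: TH_simps add_comm)
  next
    fix x assume "x \<in> carrier (TH N)"
    thus "madd (TH N) (mzero (TH N)) x = x" by (simp add: TH_simps)
  next
    fix x assume x: "x \<in> carrier (TH N)"
    have "\<forall>i. \<exists>y. y \<in> carrier N \<and> madd N (x i) y = mzero N" using x inverse by (simp add: C) blast
    then obtain y where "\<And>i. y i \<in> carrier N \<and> madd N (x i) (y i) = mzero N" by metis
    thus "\<exists>y\<in>carrier (TH N). madd (TH N) x y = mzero (TH N)"
      by (intro bexI[of _ y]) (auto simp: TH_simps)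
  next
    fix b x y assume x: "x \<in> carrier (TH N)" and y: "y \<in> carrier (TH N)"
    show "act (TH N) b (madd (TH N) x y) = madd (TH N) (act (TH N) b x) (act (TH N) b y)"
      using x y by (auto simp: C A TH_simps act_add msum_add intro!: ext)
  next
    fix a b x assume x: "x \<in> carrier (TH N)"
    show "act (TH N) (a + b) x = madd (TH N) (act (TH N) a x) (act (TH N) b x)"
      using x by (auto simp: C A TH_simps K3 add_act msum_add intro!: ext)
  next
    fix a b x assume x: "x \<in> carrier (TH N)"
    show "act (TH N) (a * b) x = act (TH N) a (act (TH N) b x)"
    proof (rule ext)
      fix c
      have xc: "\<And>j. x j \<in> carrier N" using x by (simp add: C)
      have "act (TH N) a (act (TH N) b x) c = msum N (\<lambda>j. act N (Kc a c j) (msum N (\<lambda>l. act N (Kc b j l) (x l))))"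
        using xc by (simp add: A)
      also have "\<dots> = msum N (\<lambda>j. msum N (\<lambda>l. act N (Kc a c j * Kc b j l) (x l)))"
        using xc by (simp add: act_lin)
      also have "\<dots> = msum N (\<lambda>l. act N (Kc (a * b) c l) (x l))"
        using xc by (simp add: msum_lin K1)
      also have "\<dots> = act (TH N) (a * b) x c" using xc by (simp add: A)
      finally show "act (TH N) (a * b) x c = act (TH N) a (act (TH N) b x) c" by simp
    qed
  next
    fix x assume x: "x \<in> carrier (TH N)"
    show "act (TH N) 1 x = x"
    proof (rule ext)
      fix c
      have xc: "\<And>j. x j \<in> carrier N" using x by (simp add: C)
      have "act (TH N) 1 x c = msum N (\<lambda>j. if j = c then x c else mzero N)"
        using xc by (auto simp: A K2 kron_def intro!: arg_cong[where f="msum N"])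
      also have "\<dots> = x c" using xc by (simp add: msum_delta)
      finally show "act (TH N) 1 x c = x c" .
    qed
  qed
qed

end



lemma bhom_comp: "bhom A B f \<Longrightarrow> bhom B C g \<Longrightarrow> bhom A C (\<lambda>x. g (f x))"
  unfolding bhom_def by auto

definition tr :: "('a \<Rightarrow> 'u) \<Rightarrow> ('b, 'a) bmod \<Rightarrow> ('b, 'u) bmod" where
  "tr e X = \<lparr> carrier = e ` carrier X, madd = (\<lambda>x y. e (madd X (inv e x) (inv e y))),
             mzero = e (mzero X), act = (\<lambda>b x. e (act X b (inv e x))) \<rparr>"

lemma tr_simps: "carrier (tr e X) = e ` carrier X" "madd (tr e X) x y = e (madd X (inv e x) (inv e y))"
  "mzero (tr e X) = e (mzero X)" "act (tr e X) b x = e (act X b (inv e x))"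
  by (simp_all add: tr_def)

lemma tr_props: assumes e: "inj e" and X: "bmodule (X :: ('b::ring_1, 'a) bmod)"
  shows "bmodule (tr e X)" "bhom X (tr e X) e" "bhom (tr e X) X (inv e)"
proof -
  interpret bm X by (rule bm.intro) fact
  have ie[simp]: "inv e (e x) = x" for x using e by (simp add: inv_f_f)
  have comm': "\<And>x y. x \<in> carrier X \<Longrightarrow> y \<in> carrier X \<Longrightarrow> e (madd X x y) = e (madd X y x)"
    using add_comm by metis
  show "bmodule (tr e X)" unfolding bmodule_def tr_simps
  proof (intro conjI ballI allI)
    fix x assume "x \<in> e ` carrier X"
    then obtain x' where x': "x' \<in> carrier X" "x = e x'" by blast
    then obtain y where "y \<in> carrier X" "madd X x' y = mzero X" using inverse by blast
    thus "\<exists>y\<in>e ` carrier X. e (madd X (inv e x) (inv e y)) = e (mzero X)"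
      using x' by (intro bexI[of _ "e y"]) auto
  qed (auto simp: add_assoc act_add add_act act_mult comm')
  show "bhom X (tr e X) e" unfolding bhom_def tr_simps by auto
  show "bhom (tr e X) X (inv e)" unfolding bhom_def tr_simps by auto
qed

context setting
begin

definition hproj :: "('b, 'm) bmod \<Rightarrow> ('i \<Rightarrow> 'm) \<Rightarrow> 'm" where
  "hproj N x = msum N (\<lambda>c. act N (scB (eps c) 1) (x c))"

lemma hproj_bhom: assumes "bmodule N" shows "bhom (TH N) N (hproj N)"
proof -
  interpret bm N by (rule bm.intro) fact
  have C: "x \<in> carrier (TH N) \<longleftrightarrow> (\<forall>i. x i \<in> carrier N)" for x by (simp add: TH_simps)
  show ?thesis unfolding bhom_def
  proof (intro conjI ballI allI)
    fix x assume "x \<in> carrier (TH N)" thus "hproj N x \<in> carrier N" by (simp add: C hproj_def)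
  next
    fix x y assume "x \<in> carrier (TH N)" "y \<in> carrier (TH N)"
    thus "hproj N (madd (TH N) x y) = madd N (hproj N x) (hproj N y)"
      by (simp add: C hproj_def TH_simps act_add msum_add)
  next
    fix b x assume x: "x \<in> carrier (TH N)"
    have xc: "\<And>j. x j \<in> carrier N" using x by (simp add: C)
    have "hproj N (act (TH N) b x) = msum N (\<lambda>c. act N (scB (eps c) 1) (msum N (\<lambda>j. act N (Kc b c j) (x j))))"
      using xc by (simp add: hproj_def TH_act[OF assms])
    also have "\<dots> = msum N (\<lambda>c. msum N (\<lambda>j. act N (scB (eps c) 1 * Kc b c j) (x j)))"
      using xc by (simp add: act_lin)
    also have "\<dots> = msum N (\<lambda>j. act N (b * scB (eps j) 1) (x j))"
      using xc by (simp add: msum_lin K4)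
    also have "\<dots> = act N b (hproj N x)"
      using xc by (simp add: act_lin hproj_def)
    finally show "hproj N (act (TH N) b x) = act N b (hproj N x)" .
  qed
qed

lemma hproj_surj: assumes "bmodule N" "m \<in> carrier N"
  shows "(\<lambda>c. act N (scB (u c) 1) m) \<in> carrier (TH N)" "hproj N (\<lambda>c. act N (scB (u c) 1) m) = m"
proof -
  interpret bm N by (rule bm.intro) fact
  show "(\<lambda>c. act N (scB (u c) 1) m) \<in> carrier (TH N)" using assms by (simp add: TH_simps)
  have "hproj N (\<lambda>c. act N (scB (u c) 1) m) = msum N (\<lambda>c. act N (scB (eps c) 1 * scB (u c) 1) m)"
    using assms by (simp add: hproj_def act_mult)
  also have "\<dots> = act N (scB (\<Sum>c\<in>UNIV. u c * eps c) 1) m"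
    using assms by (simp add: msum_act_const sc_prod sc_sumk mult.commute)
  also have "\<dots> = m" using assms by (simp add: ueps)
  finally show "hproj N (\<lambda>c. act N (scB (u c) 1) m) = m" .
qed

definition gint :: "('b, 'm) bmod \<Rightarrow> ('i \<Rightarrow> 'k) \<Rightarrow> 'm \<Rightarrow> 'i \<Rightarrow> 'm" where
  "gint N lam m = (\<lambda>j. act N (scB (lam j) 1) m)"

lemma gint_bhom: assumes "bmodule N" and lam: "\<And>i c. (\<Sum>j\<in>UNIV. mu i j c * lam j) = eps i * lam c"
  shows "bhom N (TH N) (gint N lam)"
proof -
  interpret bm N by (rule bm.intro) fact
  show ?thesis unfolding bhom_def
  proof (intro conjI ballI allI)
    fix x assume "x \<in> carrier N" thus "gint N lam x \<in> carrier (TH N)" by (simp add: TH_simps gint_def)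
  next
    fix x y assume "x \<in> carrier N" "y \<in> carrier N"
    thus "gint N lam (madd N x y) = madd (TH N) (gint N lam x) (gint N lam y)"
      by (simp add: TH_simps gint_def act_add)
  next
    fix b x assume x: "x \<in> carrier N"
    show "gint N lam (act N b x) = act (TH N) b (gint N lam x)"
    proof (rule ext)
      fix c
      have "act (TH N) b (gint N lam x) c = msum N (\<lambda>j. act N (Kc b c j) (act N (scB (lam j) 1) x))"
        using x by (simp add: TH_act[OF assms(1)] gint_def)
      also have "\<dots> = act N (\<Sum>j\<in>UNIV. Kc b c j * scB (lam j) 1) x"
        using x by (simp add: act_mult[symmetric] msum_act_const)
      also have "\<dots> = act N (scB (lam c) 1 * b) x" by (simp add: K5[OF lam])
      also have "\<dots> = gint N lam (act N b x) c" using x by (simp add: gint_def act_mult)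
      finally show "gint N lam (act N b x) c = act (TH N) b (gint N lam x) c" by simp
    qed
  qed
qed

lemma gint_inj: assumes "bmodule N" "lam \<noteq> (\<lambda>_. 0)" shows "inj_on (gint N lam) (carrier N)"
proof -
  interpret bm N by (rule bm.intro) fact
  obtain c where c: "lam c \<noteq> 0" using assms(2) by auto
  have rec: "act N (scB (inverse (lam c)) 1) (gint N lam m c) = m" if "m \<in> carrier N" for m
  proof -
    have "act N (scB (inverse (lam c)) 1) (gint N lam m c) = act N (scB (inverse (lam c)) 1 * scB (lam c) 1) m"
      using that by (simp add: gint_def act_mult)
    also have "\<dots> = m" using that c by (simp add: sc_prod)
    finally show ?thesis .
  qed
  show ?thesis
  proof (rule inj_onI)
    fix x y assume "x \<in> carrier N" "y \<in> carrier N" "gint N lam x = gint N lam y"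
    thus "x = y" using rec by metis
  qed
qed

end



lemma zero_bmod_simps: "carrier (zero_bmod M) = {mzero M}" "madd (zero_bmod M) = (\<lambda>x y. mzero M)"
  "mzero (zero_bmod M) = mzero M" "act (zero_bmod M) = (\<lambda>b x. mzero M)"
  by (simp_all add: zero_bmod_def)

lemma msum_zero_bmod: "msum (zero_bmod M) (f :: 'i::finite \<Rightarrow> 'm) = mzero M"
proof -
  have "foldr (\<lambda>i y. mzero M) xs (mzero M) = mzero M" for xs :: "'i list" by (induction xs) simp_all
  thus ?thesis unfolding msum_def zero_bmod_simps .
qed

lemma zero_bmodule: "bmodule (zero_bmod M)"
  unfolding bmodule_def zero_bmod_simps by auto

context setting
begin

lemma inNH: assumes M: "bmodule (M :: ('b, 'm) bmod)" and e1: "inj (e1 :: ('i \<Rightarrow> 'm) \<Rightarrow> 'u)"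
  and PI: "projective_mod TYPE('u) M \<or> injective_mod TYPE('u) M"
  shows "in_NH scB mu dB M"
proof -
  interpret bm M by (rule bm.intro) fact
  define e2 :: "'m \<Rightarrow> 'u" where "e2 m = e1 (\<lambda>_. m)" for m
  have e2: "inj e2"
  proof (rule injI)
    fix x y assume "e2 x = e2 y"
    hence "(\<lambda>_::'i. x) = (\<lambda>_. y)" using e1 unfolding e2_def by (simp add: inj_eq)
    thus "x = y" by metis
  qed
  have TM: "bmodule (TH M)" by (rule TH_bmodule[OF M])
  note trT = tr_props[OF e1 TM] and trM = tr_props[OF e2 M]
  have ie1[simp]: "inv e1 (e1 x) = x" for x using e1 by (simp add: inv_f_f)
  have ie2[simp]: "inv e2 (e2 x) = x" for x using e2 by (simp add: inv_f_f)
  from PI show ?thesis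
  proof
    assume P: "projective_mod TYPE('u) M"
    define p where "p x = e2 (hproj M (inv e1 x))" for x
    have pb: "bhom (tr e1 (TH M)) (tr e2 M) p"
      unfolding p_def by (rule bhom_comp[OF trT(3) bhom_comp[OF hproj_bhom[OF M] trM(2)]])
    have psurj: "p ` carrier (tr e1 (TH M)) = carrier (tr e2 M)"
    proof
      show "p ` carrier (tr e1 (TH M)) \<subseteq> carrier (tr e2 M)" using pb unfolding bhom_def by auto
    next
      show "carrier (tr e2 M) \<subseteq> p ` carrier (tr e1 (TH M))"
      proof
        fix y assume "y \<in> carrier (tr e2 M)"
        then obtain m where m: "m \<in> carrier M" "y = e2 m" by (auto simp: tr_simps)
        let ?x = "\<lambda>c. act M (scB (u c) 1) m"
        have "e1 ?x \<in> carrier (tr e1 (TH M))" using hproj_surj[OF M m(1)] by (simp add: tr_simps)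
        moreover have "p (e1 ?x) = y" using hproj_surj[OF M m(1)] m by (simp add: p_def)
        ultimately show "y \<in> p ` carrier (tr e1 (TH M))" by (metis image_eqI)
      qed
    qed
    obtain h where h: "bhom M (tr e1 (TH M)) h" "\<And>x. x \<in> carrier M \<Longrightarrow> p (h x) = e2 x"
      using P[unfolded projective_mod_def, rule_format, OF conjI[OF trT(1) conjI[OF trM(1) conjI[OF pb conjI[OF psurj trM(2)]]]]]
      by blast
    show ?thesis unfolding in_NH_def nullhom_def
    proof (intro exI conjI)
      show "bmodule M" by fact
      show "bhom M (TH M) (\<lambda>x. inv e1 (h x))" by (rule bhom_comp[OF h(1) trT(3)])
      show "bhom (TH M) M (hproj M)" by (rule hproj_bhom[OF M])
      show "\<forall>x\<in>carrier M. id x = hproj M (inv e1 (h x))"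
      proof
        fix x assume "x \<in> carrier M"
        hence "e2 (hproj M (inv e1 (h x))) = e2 x" using h(2) by (simp add: p_def)
        thus "id x = hproj M (inv e1 (h x))" using e2 by (simp add: inj_eq)
      qed
    qed
  next
    assume I: "injective_mod TYPE('u) M"
    obtain lam where lam: "lam \<noteq> (\<lambda>_. 0)" "\<And>a c. (\<Sum>b\<in>UNIV. mu a b c * lam b) = eps a * lam c"
      using left_integral by blast
    define i where "i x = e1 (gint M lam (inv e2 x))" for x
    have ib: "bhom (tr e2 M) (tr e1 (TH M)) i"
      unfolding i_def by (rule bhom_comp[OF trM(3) bhom_comp[OF gint_bhom[OF M lam(2)] trT(2)]])
    have iinj: "inj_on i (carrier (tr e2 M))"
    proof (rule inj_onI)
      fix x y assume x: "x \<in> carrier (tr e2 M)" and y: "y \<in> carrier (tr e2 M)" and "i x = i y"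
      hence "gint M lam (inv e2 x) = gint M lam (inv e2 y)" using e1 by (simp add: i_def inj_eq)
      moreover have "inv e2 x \<in> carrier M" "inv e2 y \<in> carrier M" using x y by (auto simp: tr_simps)
      ultimately have "inv e2 x = inv e2 y" using gint_inj[OF M lam(1)] by (meson inj_onD)
      thus "x = y" using x y by (auto simp: tr_simps)
    qed
    obtain h where h: "bhom (tr e1 (TH M)) M h" "\<And>x. x \<in> carrier (tr e2 M) \<Longrightarrow> h (i x) = inv e2 x"
      using I[unfolded injective_mod_def, rule_format, OF conjI[OF trM(1) conjI[OF trT(1) conjI[OF ib conjI[OF iinj trM(3)]]]]]
      by blast
    show ?thesis unfolding in_NH_def nullhom_def
    proof (intro exI conjI)
      show "bmodule M" by fact
      show "bhom M (TH M) (gint M lam)" by (rule gint_bhom[OF M lam(2)])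
      show "bhom (TH M) M (\<lambda>y. h (e1 y))" by (rule bhom_comp[OF trT(2) h(1)])
      show "\<forall>x\<in>carrier M. id x = h (e1 (gint M lam x))"
      proof
        fix x assume x: "x \<in> carrier M"
        hence "e2 x \<in> carrier (tr e2 M)" by (simp add: tr_simps)
        from h(2)[OF this] show "id x = h (e1 (gint M lam x))" by (simp add: i_def)
      qed
    qed
  qed
qed

lemma iso: assumes M: "bmodule (M :: ('b, 'm) bmod)" and NH: "in_NH scB mu dB M"
  shows "iso_zero_C scB mu dB M"
proof -
  interpret bm M by (rule bm.intro) fact
  obtain N g0 h0 where N: "bmodule (N :: ('b, 'm) bmod)" "bhom M (TH N) g0" "bhom (TH N) M h0"
    "\<And>x. x \<in> carrier M \<Longrightarrow> x = h0 (g0 x)"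
    using NH unfolding in_NH_def nullhom_def by auto
  have neg: "bhom M M (act M (- 1))" unfolding bhom_def
    by (auto simp: act_add act_mult[symmetric])
  let ?Z = "zero_bmod M"
  show ?thesis unfolding iso_zero_C_def
  proof (intro exI conjI)
    show "bhom M ?Z (\<lambda>x. mzero M)" unfolding bhom_def zero_bmod_simps by auto
    show "bhom ?Z M (\<lambda>x. mzero M)" unfolding bhom_def zero_bmod_simps by auto
    show "nullhom scB mu dB M M (\<lambda>x. madd M (mzero M) (act M (- 1) x))"
      unfolding nullhom_def
    proof (intro exI conjI)
      show "bmodule N" by fact
      show "bhom M (TH N) g0" by fact
      show "bhom (TH N) M (\<lambda>y. act M (- 1) (h0 y))" by (rule bhom_comp[OF N(3) neg])
      show "\<forall>x\<in>carrier M. madd M (mzero M) (act M (- 1) x) = act M (- 1) (h0 (g0 x))"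
        using N(4) by simp
    qed
    show "nullhom scB mu dB ?Z ?Z (\<lambda>x. madd ?Z (mzero M) (act ?Z (- 1) x))"
      unfolding nullhom_def
    proof (intro exI conjI)
      show "bmodule ?Z" by (rule zero_bmodule)
      show "bhom ?Z (TH ?Z) (\<lambda>x i. mzero M)"
        unfolding bhom_def by (auto simp: zero_bmod_simps TH_simps tensH_def msum_zero_bmod)
      show "bhom (TH ?Z) ?Z (\<lambda>x. mzero M)"
        unfolding bhom_def by (auto simp: zero_bmod_simps)
      show "\<forall>x\<in>carrier ?Z. madd ?Z (mzero M) (act ?Z (- 1) x) = mzero M"
        by (simp add: zero_bmod_simps)
    qed
  qed
qed

end

theorem corollary2p8:
  fixes mu :: "'i::finite \<Rightarrow> 'i \<Rightarrow> 'i \<Rightarrow> 'k::field"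
    and u :: "'i \<Rightarrow> 'k" and de :: "'i \<Rightarrow> 'i \<Rightarrow> 'i \<Rightarrow> 'k"
    and eps :: "'i \<Rightarrow> 'k" and Sa :: "'i \<Rightarrow> 'i \<Rightarrow> 'k"
    and scB :: "'k \<Rightarrow> 'b::ring_1 \<Rightarrow> 'b" and dB :: "'b \<Rightarrow> 'i \<Rightarrow> 'b"
    and M :: "('b, 'm) bmod"
  assumes "hopf_algebra mu u de eps Sa"
    and "k_algebra scB"
    and "comodule_algebra scB mu u de eps dB"
    and "bmodule M"
    and "\<exists>f :: ('i \<Rightarrow> 'm) \<Rightarrow> 'u. inj f"
    and "\<exists>g :: ('m \<Rightarrow> 'b) \<Rightarrow> 'u. inj g"
    and "projective_mod TYPE('u) M \<or> injective_mod TYPE('u) M"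
  shows "in_NH scB mu dB M \<and> iso_zero_C scB mu dB M"
proof -
  interpret S: setting mu u de eps Sa scB dB
    by (intro setting.intro hopf.intro kalg.intro setting_axioms.intro) fact+
  obtain e1 :: "('i \<Rightarrow> 'm) \<Rightarrow> 'u" where "inj e1" using assms(5) by blast
  have "in_NH scB mu dB M" by (rule S.inNH[OF assms(4) \<open>inj e1\<close> assms(7)])
  moreover have "iso_zero_C scB mu dB M" by (rule S.iso[OF assms(4) calculation])
  ultimately show ?thesis ..
qed



end
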